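(* Let $d \geq 0$ and $r \geq 2$ be integers. If $G$ is a graph of maximum degree at most $d$ satisfying $\chi(G) \leq r$, then \[\chi_P(G) \leq AT(G) \leq \left(1 - \frac{1}{4r+1}\right) d + 2.\]
   Context: All graphs are finite and simple. $\chi(G)$ is the chromatic number. Paintability: given $f:V(G)\to\mathbb N$, in the $f$-painting game each vertex $v$ starts with $f(v)$ tokens. On each turn $i$, Lister removes at most one token from each vertex, letting $S_i$ be the (nonempty) set of vertices that lost a token; Painter then colors an independent subset of $S_i$ with color $i$ (a vertex once colored stays colored). The game ends when all tokens are gone; Painter wins if every vertex has been colored. $G$ is $f$-paintable if Painter has a winning strategy; $\chi_P(G)$ is the minimum $k$ such that $G$ is $f$-paintable for the constant function $f\equiv k$. Alon–Tarsi number: for an orientation $\vec G$ of $G$, a spanning subgraph $\vec H$ (same vertex set) is Eulerian if $\deg^+_{\vec H}(v)=\deg^-_{\vec H}(v)$ for all $v$; it is even or odd according to the parity of $|E(\vec H)|$. Let $EE(\vec G)$, $EO(\vec G)$ be the numbers of even and odd Eulerian subgraphs. $\vec G$ is an Alon–Tarsi orientation if $EE(\vec G)\neq EO(\vec G)$. $AT(G)$ is the minimum $k$ such that $G$ has an Alon–Tarsi orientation with $\deg^+(v) < k$ for every vertex $v$. *)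

theory Defs
  imports Complex_Main
begin

definition simple_graph :: "'a set \<Rightarrow> 'a set set \<Rightarrow> bool" where
  "simple_graph V E \<longleftrightarrow> finite V \<and> (\<forall>e\<in>E. \<exists>u v. e = {u, v} \<and> u \<in> V \<and> v \<in> V \<and> u \<noteq> v)"

definition degree :: "'a set \<Rightarrow> 'a set set \<Rightarrow> 'a \<Rightarrow> nat" where
  "degree V E v = card {u\<in>V. {u, v} \<in> E}"

definition max_degree_le :: "'a set \<Rightarrow> 'a set set \<Rightarrow> nat \<Rightarrow> bool" where
  "max_degree_le V E d \<longleftrightarrow> (\<forall>v\<in>V. degree V E v \<le> d)"

definition proper_coloring :: "'a set \<Rightarrow> 'a set set \<Rightarrow> ('a \<Rightarrow> nat) \<Rightarrow> nat \<Rightarrow> bool" where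
  "proper_coloring V E c k \<longleftrightarrow> (\<forall>v\<in>V. c v < k) \<and> (\<forall>u v. {u, v} \<in> E \<longrightarrow> c u \<noteq> c v)"

definition chromatic_number :: "'a set \<Rightarrow> 'a set set \<Rightarrow> nat" where
  "chromatic_number V E = (LEAST k. \<exists>c. proper_coloring V E c k)"

definition independent :: "'a set set \<Rightarrow> 'a set \<Rightarrow> bool" where
  "independent E I \<longleftrightarrow> (\<forall>u\<in>I. \<forall>v\<in>I. {u, v} \<notin> E)"

text \<open>State: set C of already coloured vertices and token function f.
  painter_wins V E C f: Painter has a winning strategy from this state.
  The game is finite (total token count strictly decreases), so the inductive
  (least fixed point) reading is exactly "Painter has a winning strategy".\<close>
inductive painter_wins :: "'a set \<Rightarrow> 'a set set \<Rightarrow> 'a set \<Rightarrow> ('a \<Rightarrow> nat) \<Rightarrow> bool"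
  for V :: "'a set" and E :: "'a set set" where
  game_over: "(\<forall>v\<in>V. f v = 0) \<Longrightarrow> V \<subseteq> C \<Longrightarrow> painter_wins V E C f"
| step: "(\<exists>v\<in>V. 0 < f v) \<Longrightarrow>
    (\<forall>S. S \<noteq> {} \<and> S \<subseteq> {v\<in>V. 0 < f v} \<longrightarrow>
        (\<exists>I. I \<subseteq> S \<and> independent E I \<and>
             painter_wins V E (C \<union> I) (\<lambda>v. if v \<in> S then f v - 1 else f v))) \<Longrightarrow>
    painter_wins V E C f"

definition f_paintable :: "'a set \<Rightarrow> 'a set set \<Rightarrow> ('a \<Rightarrow> nat) \<Rightarrow> bool" where
  "f_paintable V E f \<longleftrightarrow> painter_wins V E {} f"

definition paint_number :: "'a set \<Rightarrow> 'a set set \<Rightarrow> nat" where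
  "paint_number V E = (LEAST k. f_paintable V E (\<lambda>_. k))"

definition orientation :: "'a set set \<Rightarrow> ('a \<times> 'a) set \<Rightarrow> bool" where
  "orientation E D \<longleftrightarrow> (\<forall>(u, v)\<in>D. {u, v} \<in> E) \<and>
     (\<forall>u v. {u, v} \<in> E \<longrightarrow> ((u, v) \<in> D \<longleftrightarrow> (v, u) \<notin> D))"

definition outdeg :: "('a \<times> 'a) set \<Rightarrow> 'a \<Rightarrow> nat" where
  "outdeg D v = card {u. (v, u) \<in> D}"

definition indeg :: "('a \<times> 'a) set \<Rightarrow> 'a \<Rightarrow> nat" where
  "indeg D v = card {u. (u, v) \<in> D}"

text \<open>Spanning Eulerian subgraphs of an oriented graph (given by its arc set; spanning means
  same vertex set, so they are determined by their arc subsets).\<close>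
definition eulerian_subgraphs :: "'a set \<Rightarrow> ('a \<times> 'a) set \<Rightarrow> ('a \<times> 'a) set set" where
  "eulerian_subgraphs V D = {H. H \<subseteq> D \<and> (\<forall>v\<in>V. outdeg H v = indeg H v)}"

definition EE :: "'a set \<Rightarrow> ('a \<times> 'a) set \<Rightarrow> nat" where
  "EE V D = card {H \<in> eulerian_subgraphs V D. even (card H)}"

definition EO :: "'a set \<Rightarrow> ('a \<times> 'a) set \<Rightarrow> nat" where
  "EO V D = card {H \<in> eulerian_subgraphs V D. odd (card H)}"

definition AT_orientation :: "'a set \<Rightarrow> ('a \<times> 'a) set \<Rightarrow> bool" where
  "AT_orientation V D \<longleftrightarrow> EE V D \<noteq> EO V D"

definition AT_number :: "'a set \<Rightarrow> 'a set set \<Rightarrow> nat" where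
  "AT_number V E = (LEAST k. \<exists>D. orientation E D \<and> AT_orientation V D \<and> (\<forall>v\<in>V. outdeg D v < k))"

end

theory Submission
  imports Defs
begin



definition arcsIn :: "('a \<times> 'a) set \<Rightarrow> 'a set \<Rightarrow> ('a \<times> 'a) set" where
  "arcsIn R W = {e\<in>R. fst e \<in> W \<and> snd e \<in> W}"

definition outA :: "('a \<times> 'a) set \<Rightarrow> ('a \<times> 'a) set \<Rightarrow> 'a \<Rightarrow> nat" where
  "outA A Y v = card {e\<in>A-Y. fst e = v} + card {e\<in>Y. snd e = v}"

definition cf :: "('a \<times> 'a) set \<Rightarrow> 'a set \<Rightarrow> ('a \<Rightarrow> nat) \<Rightarrow> int" where
  "cf A W t = (\<Sum>Y\<in>Pow A. if (\<forall>v\<in>W. outA A Y v = t v) then (-1)^card Y else 0)"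

lemma fiber_card_sum:
  assumes "finite A" "finite W" "f ` A \<subseteq> W"
  shows "(\<Sum>v\<in>W. card {e\<in>A. f e = v}) = card A"
proof -
  have "A = (\<Union>v\<in>W. {e\<in>A. f e = v})" using assms(3) by auto
  hence "card A = card (\<Union>v\<in>W. {e\<in>A. f e = v})" by simp
  also have "\<dots> = (\<Sum>v\<in>W. card {e\<in>A. f e = v})"
    by (rule card_UN_disjoint) (use assms in auto)
  finally show ?thesis by simp
qed

lemma outA_sum:
  assumes "finite A" "finite W" "Y \<subseteq> A" "fst ` A \<subseteq> W" "snd ` A \<subseteq> W"
  shows "(\<Sum>v\<in>W. outA A Y v) = card A"
proof -
  have "(\<Sum>v\<in>W. outA A Y v) = (\<Sum>v\<in>W. card {e\<in>A-Y. fst e = v}) + (\<Sum>v\<in>W. card {e\<in>Y. snd e = v})"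
    by (simp add: outA_def sum.distrib)
  also have "(\<Sum>v\<in>W. card {e\<in>A-Y. fst e = v}) = card (A - Y)"
    by (rule fiber_card_sum) (use assms in auto)
  also have "(\<Sum>v\<in>W. card {e\<in>Y. snd e = v}) = card Y"
    by (rule fiber_card_sum) (use assms finite_subset in auto)
  also have "card (A - Y) + card Y = card A"
    using assms by (metis card_Diff_subset finite_subset card_mono le_add_diff_inverse2)
  finally show ?thesis .
qed

lemma alt_sum:
  assumes "finite S" "K \<subseteq> S"
  shows "(\<Sum>J\<in>Pow S. if K \<subseteq> J then (-1::int)^card (S - J) else 0) = (if K = S then 1 else 0)"
proof (cases "K = S")
  case True
  have "(\<Sum>J\<in>Pow S. if K \<subseteq> J then (-1::int)^card (S - J) else 0) = (\<Sum>J\<in>{S}. (-1::int)^card (S - J))"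
    by (rule sum.mono_neutral_cong_right) (use True assms in auto)
  then show ?thesis using True by simp
next
  case False
  hence sub: "K \<subset> S" using assms by auto
  have "(\<Sum>J\<in>Pow S. if K \<subseteq> J then (-1::int)^card (S - J) else 0)
      = (\<Sum>J\<in>{T. T \<subseteq> S \<and> K \<subseteq> T}. (-1::int)^card (S - J))"
    by (rule sum.mono_neutral_cong_right) (use assms in auto)
  also have "\<dots> = (\<Sum>J\<in>{T. T \<subseteq> S \<and> K \<subseteq> T}. (-1::int)^card S * (-1)^card J)"
  proof (rule sum.cong[OF refl])
    fix J assume "J \<in> {T. T \<subseteq> S \<and> K \<subseteq> T}"
    hence "J \<subseteq> S" by auto
    hence "card (S - J) = card S - card J" "card J \<le> card S"
      using assms(1) by (auto simp: card_Diff_subset finite_subset card_mono)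
    thus "(-1::int)^card (S - J) = (-1)^card S * (-1)^card J"
      by (simp add: neg_one_power_add_eq_neg_one_power_diff power_add[symmetric])
  qed
  also have "\<dots> = (-1)^card S * (\<Sum>J\<in>{T. T \<subseteq> S \<and> K \<subseteq> T}. (-1::int)^card J)"
    by (simp add: sum_distrib_left)
  also have "(\<Sum>J\<in>{T. T \<subseteq> S \<and> K \<subseteq> T}. (-1::int)^card J) = 0"
  proof (rule sum_alternating_cancels)
    show "finite {T. T \<subseteq> S \<and> K \<subseteq> T}" using assms by auto
    show "card {x \<in> {T. T \<subseteq> S \<and> K \<subseteq> T}. even (card x)} = card {x \<in> {T. T \<subseteq> S \<and> K \<subseteq> T}. odd (card x)}"
      using card_subsupersets_even_odd[OF assms(1) sub] by (simp add: conj_assoc)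
  qed
  finally show ?thesis using False by simp
qed

definition flip :: "'b \<Rightarrow> 'b set \<Rightarrow> 'b set" where
  "flip x Y = (if x \<in> Y then Y - {x} else insert x Y)"

lemma flip_zero:
  assumes "finite A" "e0 \<in> A" "\<And>Y. Y \<subseteq> A \<Longrightarrow> cond (flip e0 Y) = cond Y"
  shows "(\<Sum>Y\<in>Pow A. if cond Y then (-1::int)^card Y else 0) = 0"
proof -
  let ?g = "\<lambda>Y. if cond Y then (-1::int)^card Y else 0"
  have fl: "flip e0 (flip e0 Y) = Y" for Y using assms(2) by (auto simp: flip_def)
  have flP: "Y \<in> Pow A \<Longrightarrow> flip e0 Y \<in> Pow A" for Y using assms(2) by (auto simp: flip_def)
  have neg: "?g (flip e0 Y) = - ?g Y" if "Y \<in> Pow A" for Y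
  proof -
    have fY: "finite Y" using that assms(1) finite_subset by auto
    have c: "cond (flip e0 Y) = cond Y" using assms(3) that by auto
    show ?thesis
    proof (cases "e0 \<in> Y")
      case True
      hence "card Y = Suc (card (Y - {e0}))" using fY by (metis card_Suc_Diff1)
      hence "(-1::int)^card Y = - ((-1)^card (Y - {e0}))" by simp
      then show ?thesis using True c by (simp add: flip_def)
    next
      case False
      hence "card (insert e0 Y) = Suc (card Y)" using fY by simp
      then show ?thesis using False c by (simp add: flip_def)
    qed
  qed
  have "sum ?g (Pow A) = sum (\<lambda>Y. ?g (flip e0 Y)) (Pow A)"
    by (rule sum.reindex_bij_witness[of _ "flip e0" "flip e0"]) (use fl flP in auto)
  also have "\<dots> = - sum ?g (Pow A)"
    using neg by (simp add: sum_negf[symmetric])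
  finally show ?thesis by simp
qed

lemma outA_flip:
  assumes "v \<noteq> fst e0" "v \<noteq> snd e0"
  shows "outA A (flip e0 Y) v = outA A Y v"
proof -
  have "{e\<in>A - flip e0 Y. fst e = v} = {e\<in>A-Y. fst e = v}" using assms by (auto simp: flip_def)
  moreover have "{e\<in>flip e0 Y. snd e = v} = {e\<in>Y. snd e = v}" using assms by (auto simp: flip_def)
  ultimately show ?thesis by (simp add: outA_def)
qed

lemma outA_union:
  assumes "A1 \<inter> A2 = {}" "Y1 \<subseteq> A1" "Y2 \<subseteq> A2" "finite A1" "finite A2"
  shows "outA (A1 \<union> A2) (Y1 \<union> Y2) v = outA A1 Y1 v + outA A2 Y2 v"
proof -
  have "{e\<in>(A1 \<union> A2) - (Y1 \<union> Y2). fst e = v} = {e\<in>A1 - Y1. fst e = v} \<union> {e\<in>A2 - Y2. fst e = v}"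
    using assms by auto
  hence 1: "card {e\<in>(A1 \<union> A2) - (Y1 \<union> Y2). fst e = v} = card {e\<in>A1 - Y1. fst e = v} + card {e\<in>A2 - Y2. fst e = v}"
    using assms by (simp add: card_Un_disjoint disjoint_iff)
  have "{e\<in>Y1 \<union> Y2. snd e = v} = {e\<in>Y1. snd e = v} \<union> {e\<in>Y2. snd e = v}" by auto
  moreover have "finite {e\<in>Y1. snd e = v}" "finite {e\<in>Y2. snd e = v}"
    using assms by (auto intro: finite_subset)
  moreover have "{e\<in>Y1. snd e = v} \<inter> {e\<in>Y2. snd e = v} = {}" using assms by auto
  ultimately have 2: "card {e\<in>Y1 \<union> Y2. snd e = v} = card {e\<in>Y1. snd e = v} + card {e\<in>Y2. snd e = v}"
    by (simp add: card_Un_disjoint)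
  show ?thesis using 1 2 by (simp add: outA_def)
qed

lemma pow_split_sum:
  assumes "A1 \<inter> A2 = {}" "finite A1" "finite A2"
  shows "(\<Sum>Y\<in>Pow (A1 \<union> A2). h Y) = (\<Sum>Y2\<in>Pow A2. \<Sum>Y1\<in>Pow A1. h (Y1 \<union> Y2))"
proof -
  have "(\<Sum>Y2\<in>Pow A2. \<Sum>Y1\<in>Pow A1. h (Y1 \<union> Y2)) = (\<Sum>p\<in>Pow A2 \<times> Pow A1. h (snd p \<union> fst p))"
    by (simp add: sum.cartesian_product case_prod_beta)
  also have "\<dots> = (\<Sum>Y\<in>Pow (A1 \<union> A2). h Y)"
    by (rule sum.reindex_bij_witness[of _ "\<lambda>Y. (Y \<inter> A2, Y \<inter> A1)" "\<lambda>p. snd p \<union> fst p"])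
       (use assms in auto)
  finally show ?thesis by simp
qed




lemma core:
  assumes finR: "finite R" and finW: "finite W" and SW: "S \<subseteq> W"
    and nz: "cf (arcsIn R W) W t \<noteq> 0"
  shows "\<exists>J\<subseteq>S. (\<forall>e\<in>R. fst e \<in> J \<longrightarrow> snd e \<notin> J) \<and>
           (\<exists>t'. (\<forall>v\<in>W-J. t' v \<le> t v) \<and> (\<forall>v\<in>S-J. t' v < t v) \<and>
                 cf (arcsIn R (W-J)) (W-J) t' \<noteq> 0)"
proof -
  define A where "A = arcsIn R W"
  have finA: "finite A" using finR by (simp add: A_def arcsIn_def)
  have fstA: "fst ` A \<subseteq> W" and sndA: "snd ` A \<subseteq> W" by (auto simp: A_def arcsIn_def)
  have finS: "finite S" using SW finW finite_subset by auto
  define condJ where "condJ J Y = ((\<forall>v\<in>W-S. outA A Y v = t v) \<and> (\<forall>v\<in>S-J. outA A Y v < t v))" for J Y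
  define B where "B J = (\<Sum>Y\<in>Pow A. if condJ J Y then (-1::int)^card Y else 0)" for J
  have sumt: "(\<Sum>v\<in>W. t v) = card A"
  proof -
    obtain Y where Y: "Y \<in> Pow A" "\<forall>v\<in>W. outA A Y v = t v"
    proof (rule ccontr)
      assume "\<not> thesis"
      hence "\<forall>Y\<in>Pow A. \<not> (\<forall>v\<in>W. outA A Y v = t v)" using that by blast
      hence "cf A W t = 0" unfolding cf_def by (intro sum.neutral) auto
      thus False using nz by (simp add: A_def)
    qed
    have "(\<Sum>v\<in>W. t v) = (\<Sum>v\<in>W. outA A Y v)" using Y by simp
    also have "\<dots> = card A" by (rule outA_sum) (use Y finA finW fstA sndA in auto)
    finally show ?thesis .
  qed
  have step2: "cf A W t = (\<Sum>J\<in>Pow S. (-1)^card (S - J) * B J)"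
  proof -
    have "(\<Sum>J\<in>Pow S. (-1)^card (S - J) * B J)
        = (\<Sum>J\<in>Pow S. \<Sum>Y\<in>Pow A. (if condJ J Y then (-1::int)^card (S - J) * (-1)^card Y else 0))"
      by (simp add: B_def sum_distrib_left if_distrib cong: if_cong)
    also have "\<dots> = (\<Sum>Y\<in>Pow A. \<Sum>J\<in>Pow S. (if condJ J Y then (-1::int)^card (S - J) * (-1)^card Y else 0))"
      by (rule sum.swap)
    also have "\<dots> = (\<Sum>Y\<in>Pow A. if (\<forall>v\<in>W. outA A Y v = t v) then (-1)^card Y else 0)"
    proof (rule sum.cong[OF refl])
      fix Y assume YA: "Y \<in> Pow A"
      define K where "K = {v\<in>S. t v \<le> outA A Y v}"
      have KS: "K \<subseteq> S" by (auto simp: K_def)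
      have cJ: "condJ J Y = ((\<forall>v\<in>W-S. outA A Y v = t v) \<and> K \<subseteq> J)" if "J \<subseteq> S" for J
        using that unfolding condJ_def K_def by (auto simp: not_le) (meson DiffI leD)
      have "(\<Sum>J\<in>Pow S. (if condJ J Y then (-1::int)^card (S - J) * (-1)^card Y else 0))
          = (\<Sum>J\<in>Pow S. (if (\<forall>v\<in>W-S. outA A Y v = t v) then (-1)^card Y * (if K \<subseteq> J then (-1::int)^card (S - J) else 0) else 0))"
        by (rule sum.cong[OF refl]) (auto simp: cJ)
      also have "\<dots> = (if (\<forall>v\<in>W-S. outA A Y v = t v) then (-1)^card Y * (\<Sum>J\<in>Pow S. (if K \<subseteq> J then (-1::int)^card (S - J) else 0)) else 0)"
      proof (cases "\<forall>v\<in>W-S. outA A Y v = t v")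
        case True then show ?thesis by (simp add: sum_distrib_left)
      next
        case False then show ?thesis by (simp only: if_not_P[OF False] if_False sum.neutral_const)
      qed
      also have "\<dots> = (if (\<forall>v\<in>W-S. outA A Y v = t v) \<and> K = S then (-1)^card Y else 0)"
        by (subst alt_sum[OF finS KS]) simp
      also have "((\<forall>v\<in>W-S. outA A Y v = t v) \<and> K = S) = (\<forall>v\<in>W. outA A Y v = t v)"
      proof
        assume h: "(\<forall>v\<in>W-S. outA A Y v = t v) \<and> K = S"
        have le: "\<And>v. v \<in> W \<Longrightarrow> t v \<le> outA A Y v"
        proof -
          fix v assume "v \<in> W"
          show "t v \<le> outA A Y v"
          proof (cases "v \<in> S")
            case True then show ?thesis using h by (auto simp: K_def)
          next
            case False then show ?thesis using h \<open>v \<in> W\<close> by auto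
          qed
        qed
        have eqs: "(\<Sum>v\<in>W. t v) = (\<Sum>v\<in>W. outA A Y v)"
          using sumt outA_sum[OF finA finW _ fstA sndA] YA by auto
        show "\<forall>v\<in>W. outA A Y v = t v"
          using sum_mono_inv[OF eqs le _ finW] by auto
      next
        assume "\<forall>v\<in>W. outA A Y v = t v"
        thus "(\<forall>v\<in>W-S. outA A Y v = t v) \<and> K = S" using SW by (auto simp: K_def)
      qed
      finally show "(\<Sum>J\<in>Pow S. (if condJ J Y then (-1::int)^card (S - J) * (-1)^card Y else 0))
          = (if (\<forall>v\<in>W. outA A Y v = t v) then (-1)^card Y else 0)" .
    qed
    also have "\<dots> = cf A W t" by (simp add: cf_def)
    finally show ?thesis by simp
  qed
  obtain J where JS: "J \<in> Pow S" and BJ: "B J \<noteq> 0"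
  proof (rule ccontr)
    assume "\<not> thesis"
    hence "\<forall>J\<in>Pow S. B J = 0" using that by blast
    hence "cf A W t = 0" using step2 by simp
    thus False using nz by (simp add: A_def)
  qed
  have JW: "J \<subseteq> W" using JS SW by auto
  have indep: "\<forall>e\<in>R. fst e \<in> J \<longrightarrow> snd e \<notin> J"
  proof (rule ccontr)
    assume "\<not> ?thesis"
    then obtain e0 where e0: "e0 \<in> R" "fst e0 \<in> J" "snd e0 \<in> J" by blast
    have e0A: "e0 \<in> A" using e0 JW by (auto simp: A_def arcsIn_def)
    have "B J = 0" unfolding B_def
    proof (rule flip_zero[OF finA e0A])
      fix Y assume "Y \<subseteq> A"
      have h: "\<And>v. v \<in> W - J \<Longrightarrow> outA A (flip e0 Y) v = outA A Y v"
        using e0 by (intro outA_flip) auto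
      have h1: "\<forall>v\<in>W-S. outA A (flip e0 Y) v = outA A Y v" using h JS by auto
      have h2: "\<forall>v\<in>S-J. outA A (flip e0 Y) v = outA A Y v" using h SW by auto
      show "condJ J (flip e0 Y) = condJ J Y"
        unfolding condJ_def using h1 h2 by simp
    qed
    thus False using BJ by simp
  qed
  show ?thesis
  proof (rule ccontr)
    assume "\<not> ?thesis"
    hence none: "\<And>t'. (\<forall>v\<in>W-J. t' v \<le> t v) \<Longrightarrow> (\<forall>v\<in>S-J. t' v < t v) \<Longrightarrow> cf (arcsIn R (W-J)) (W-J) t' = 0"
      using JS indep by blast
    define A' where "A' = arcsIn R (W-J)"
    define X where "X = A - A'"
    have A'A: "A' \<subseteq> A" by (auto simp: A_def A'_def arcsIn_def)
    have AU: "A = A' \<union> X" and disj: "A' \<inter> X = {}" using A'A by (auto simp: X_def)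
    have finA': "finite A'" and finX: "finite X" using finA A'A by (auto simp: X_def intro: finite_subset)
    have "B J = (\<Sum>Y2\<in>Pow X. \<Sum>Y1\<in>Pow A'. (if condJ J (Y1 \<union> Y2) then (-1::int)^card (Y1 \<union> Y2) else 0))"
      unfolding B_def by (subst AU, rule pow_split_sum[OF disj finA' finX])
    also have "\<dots> = 0"
    proof (rule sum.neutral, rule ballI)
      fix Y2 assume Y2: "Y2 \<in> Pow X"
      define o2 where "o2 = outA X Y2"
      define cnd where "cnd g = ((\<forall>v\<in>W-S. g v = t v) \<and> (\<forall>v\<in>S-J. g v < t v))" for g :: "'a \<Rightarrow> nat"
      define \<tau> where "\<tau> Y1 = (\<lambda>v. if v \<in> W - J then outA A' Y1 v else 0)" for Y1
      have eq1: "(if condJ J (Y1 \<union> Y2) then (-1::int)^card (Y1 \<union> Y2) else 0)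
               = (-1)^card Y2 * (if cnd (\<lambda>v. \<tau> Y1 v + o2 v) then (-1)^card Y1 else 0)"
        if Y1: "Y1 \<in> Pow A'" for Y1
      proof -
        have out: "outA A (Y1 \<union> Y2) v = outA A' Y1 v + o2 v" for v
          unfolding o2_def AU by (rule outA_union) (use disj Y1 Y2 finA' finX in auto)
        have "condJ J (Y1 \<union> Y2) = cnd (\<lambda>v. \<tau> Y1 v + o2 v)"
          using JS SW by (auto simp: condJ_def cnd_def out \<tau>_def)
        moreover have "card (Y1 \<union> Y2) = card Y1 + card Y2"
          using Y1 Y2 disj finA' finX by (subst card_Un_disjoint) (auto intro: finite_subset)
        ultimately show ?thesis by (simp add: power_add)
      qed
      have "(\<Sum>Y1\<in>Pow A'. (if condJ J (Y1 \<union> Y2) then (-1::int)^card (Y1 \<union> Y2) else 0))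
          = (-1)^card Y2 * (\<Sum>Y1\<in>Pow A'. (if cnd (\<lambda>v. \<tau> Y1 v + o2 v) then (-1)^card Y1 else 0))"
        by (simp add: eq1 sum_distrib_left)
      also have "(\<Sum>Y1\<in>Pow A'. (if cnd (\<lambda>v. \<tau> Y1 v + o2 v) then (-1::int)^card Y1 else 0)) = 0"
      proof -
        let ?h = "\<lambda>Y1. (if cnd (\<lambda>v. \<tau> Y1 v + o2 v) then (-1::int)^card Y1 else 0)"
        have "sum ?h (Pow A') = (\<Sum>y\<in>\<tau> ` Pow A'. sum ?h {x \<in> Pow A'. \<tau> x = y})"
          by (rule sum.image_gen) (use finA' in simp)
        also have "\<dots> = 0"
        proof (rule sum.neutral, rule ballI)
          fix y assume "y \<in> \<tau> ` Pow A'"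
          then obtain Y0 where Y0: "y = \<tau> Y0" by blast
          have yout: "y v = 0" if "v \<notin> W - J" for v using that unfolding Y0 \<tau>_def by auto
          have "sum ?h {x \<in> Pow A'. \<tau> x = y} = (\<Sum>x\<in>{x \<in> Pow A'. \<tau> x = y}. if cnd (\<lambda>v. y v + o2 v) then (-1::int)^card x else 0)"
            by (rule sum.cong) auto
          also have "\<dots> = (if cnd (\<lambda>v. y v + o2 v) then (\<Sum>x\<in>{x \<in> Pow A'. \<tau> x = y}. (-1::int)^card x) else 0)"
            by simp
          also have "\<dots> = 0"
          proof (cases "cnd (\<lambda>v. y v + o2 v)")
            case False then show ?thesis by simp
          next
            case True
            have "\<forall>v\<in>W-J. y v \<le> t v"
            proof
              fix v assume v: "v \<in> W - J"
              show "y v \<le> t v"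
              proof (cases "v \<in> S")
                case True' : True
                hence "y v + o2 v < t v" using True v by (auto simp: cnd_def)
                then show ?thesis by simp
              next
                case False
                hence "y v + o2 v = t v" using True v by (auto simp: cnd_def)
                then show ?thesis by simp
              qed
            qed
            moreover have "\<forall>v\<in>S-J. y v < t v"
            proof
              fix v assume "v \<in> S - J"
              hence "y v + o2 v < t v" using True by (auto simp: cnd_def)
              thus "y v < t v" by simp
            qed
            ultimately have cf0: "cf A' (W-J) y = 0" using none by (simp add: A'_def)
            have "(\<Sum>x\<in>{x \<in> Pow A'. \<tau> x = y}. (-1::int)^card x) = cf A' (W-J) y"
            proof -
              have "\<tau> x = y \<longleftrightarrow> (\<forall>v\<in>W-J. outA A' x v = y v)" for x
              proof
                assume "\<tau> x = y" thus "\<forall>v\<in>W-J. outA A' x v = y v" by (auto simp: \<tau>_def)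
              next
                assume h: "\<forall>v\<in>W-J. outA A' x v = y v"
                show "\<tau> x = y"
                proof
                  fix v show "\<tau> x v = y v" using h yout by (cases "v \<in> W - J") (auto simp: \<tau>_def)
                qed
              qed
              hence "{x \<in> Pow A'. \<tau> x = y} = {x \<in> Pow A'. \<forall>v\<in>W-J. outA A' x v = y v}" by auto
              hence "(\<Sum>x\<in>{x \<in> Pow A'. \<tau> x = y}. (-1::int)^card x) = (\<Sum>x\<in>{x \<in> Pow A'. \<forall>v\<in>W-J. outA A' x v = y v}. (-1)^card x)"
                by simp
              also have "\<dots> = cf A' (W-J) y" unfolding cf_def by (rule sum.inter_filter) (simp add: finA')
              finally show ?thesis .
            qed
            then show ?thesis using True cf0 by simp
          qed
          finally show "sum ?h {x \<in> Pow A'. \<tau> x = y} = 0" .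
        qed
        finally show ?thesis .
      qed
      finally show "(\<Sum>Y1\<in>Pow A'. (if condJ J (Y1 \<union> Y2) then (-1::int)^card (Y1 \<union> Y2) else 0)) = 0" by simp
    qed
    finally show False using BJ by simp
  qed
qed




lemma simple_edge:
  assumes "simple_graph V E" "{u,v} \<in> E"
  shows "u \<in> V" "v \<in> V" "u \<noteq> v"
proof -
  obtain a b where ab: "{u,v} = {a,b}" "a \<in> V" "b \<in> V" "a \<noteq> b"
    using assms unfolding simple_graph_def by blast
  thus "u \<in> V" "v \<in> V" "u \<noteq> v" by (auto simp: doubleton_eq_iff)
qed

lemma paint:
  assumes sg: "simple_graph V E" and RV: "R \<subseteq> V \<times> V"
    and RE: "\<forall>u v. {u,v} \<in> E \<longrightarrow> (u,v) \<in> R \<or> (v,u) \<in> R"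
  shows "(\<forall>v\<in>V-C. t v < f v) \<Longrightarrow> cf (arcsIn R (V-C)) (V-C) t \<noteq> 0 \<Longrightarrow> painter_wins V E C f"
proof (induction "sum f V" arbitrary: C f t rule: less_induct)
  case less
  have finV: "finite V" using sg by (simp add: simple_graph_def)
  have finR: "finite R" using RV finV by (meson finite_SigmaI finite_subset)
  show ?case
  proof (cases "\<forall>v\<in>V. f v = 0")
    case True
    have "V \<subseteq> C"
    proof
      fix v assume "v \<in> V"
      show "v \<in> C"
      proof (rule ccontr)
        assume "v \<notin> C"
        hence "t v < f v" using less.prems(1) \<open>v \<in> V\<close> by auto
        thus False using True \<open>v \<in> V\<close> by auto
      qed
    qed
    thus ?thesis using True by (intro game_over)
  next
    case False
    hence ex: "\<exists>v\<in>V. 0 < f v" by auto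
    show ?thesis
    proof (rule step[OF ex], intro allI impI)
      fix S assume S: "S \<noteq> {} \<and> S \<subseteq> {v\<in>V. 0 < f v}"
      define W where "W = V - C"
      have finW: "finite W" using finV by (simp add: W_def)
      have SW: "S \<inter> W \<subseteq> W" by auto
      have nz0: "cf (arcsIn R W) W t \<noteq> 0" using less.prems(2) by (simp add: W_def)
      obtain J t' where JS: "J \<subseteq> S \<inter> W" and ind: "\<forall>e\<in>R. fst e \<in> J \<longrightarrow> snd e \<notin> J"
        and t1: "\<forall>v\<in>W-J. t' v \<le> t v" and t2: "\<forall>v\<in>(S \<inter> W)-J. t' v < t v"
        and nz: "cf (arcsIn R (W-J)) (W-J) t' \<noteq> 0"
        using core[OF finR finW SW nz0] by metis
      define f' where "f' = (\<lambda>v. if v \<in> S then f v - 1 else f v)"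
      have indep: "independent E J"
        unfolding independent_def
      proof (intro ballI)
        fix u v assume uv: "u \<in> J" "v \<in> J"
        show "{u,v} \<notin> E"
        proof
          assume "{u,v} \<in> E"
          hence "(u,v) \<in> R \<or> (v,u) \<in> R" using RE by blast
          thus False
          proof
            assume "(u,v) \<in> R" thus False using ind uv by (metis fst_conv snd_conv)
          next
            assume "(v,u) \<in> R" thus False using ind uv by (metis fst_conv snd_conv)
          qed
        qed
      qed
      have lt: "sum f' V < sum f V"
      proof (rule sum_strict_mono_ex1[OF finV])
        show "\<forall>x\<in>V. f' x \<le> f x" by (auto simp: f'_def)
        obtain s where "s \<in> S" using S by blast
        hence "s \<in> V" "0 < f s" using S by auto
        moreover have "f' s < f s" using \<open>s \<in> S\<close> \<open>0 < f s\<close> by (simp add: f'_def)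
        ultimately show "\<exists>a\<in>V. f' a < f a" by blast
      qed
      have VCJ: "V - (C \<union> J) = W - J" by (auto simp: W_def)
      have tf: "\<forall>v\<in>V-(C \<union> J). t' v < f' v"
      proof
        fix v assume v: "v \<in> V - (C \<union> J)"
        hence vW: "v \<in> W - J" by (auto simp: W_def)
        have tv: "t v < f v" using less.prems(1) vW by (auto simp: W_def)
        show "t' v < f' v"
        proof (cases "v \<in> S")
          case True
          hence "t' v < t v" using t2 vW by auto
          thus ?thesis using tv True by (simp add: f'_def)
        next
          case False
          have "t' v \<le> t v" using t1 vW by blast
          thus ?thesis using False tv by (simp add: f'_def)
        qed
      qed
      have nz': "cf (arcsIn R (V - (C \<union> J))) (V - (C \<union> J)) t' \<noteq> 0" using nz VCJ by simp
      have "painter_wins V E (C \<union> J) f'"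
        by (rule less.hyps[OF lt tf nz'])
      thus "\<exists>I. I \<subseteq> S \<and> independent E I \<and>
             painter_wins V E (C \<union> I) (\<lambda>v. if v \<in> S then f v - 1 else f v)"
        using JS indep by (auto simp: f'_def)
    qed
  qed
qed

lemma card_out_fst: "card {u. (v,u) \<in> Y} = card {e\<in>Y. fst e = v}"
proof -
  have "{e\<in>Y. fst e = v} = Pair v ` {u. (v,u) \<in> Y}" by force
  moreover have "inj (Pair v)" by (auto simp: inj_def)
  ultimately show ?thesis by (simp add: card_image inj_on_def)
qed

lemma card_in_snd: "card {u. (u,v) \<in> Y} = card {e\<in>Y. snd e = v}"
proof -
  have "{e\<in>Y. snd e = v} = (\<lambda>u. (u,v)) ` {u. (u,v) \<in> Y}" by force
  moreover have "inj (\<lambda>u. (u,v))" by (auto simp: inj_def)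
  ultimately show ?thesis by (simp add: card_image inj_on_def)
qed

lemma AT_cf:
  assumes sg: "simple_graph V E" and orient: "orientation E D" and at: "AT_orientation V D"
  shows "cf (arcsIn D V) V (outdeg D) \<noteq> 0"
proof -
  have finV: "finite V" using sg by (simp add: simple_graph_def)
  have DV: "D \<subseteq> V \<times> V"
  proof
    fix e assume "e \<in> D"
    then obtain a b where e: "e = (a,b)" "(a,b) \<in> D" by (cases e) auto
    hence "{a,b} \<in> E" using orient by (auto simp: orientation_def)
    thus "e \<in> V \<times> V" using simple_edge[OF sg] e by auto
  qed
  have finD: "finite D" using DV finV by (meson finite_SigmaI finite_subset)
  have aD: "arcsIn D V = D" using DV by (auto simp: arcsIn_def)
  have key: "(\<forall>v\<in>V. outA D Y v = outdeg D v) \<longleftrightarrow> (\<forall>v\<in>V. outdeg Y v = indeg Y v)" if YD: "Y \<subseteq> D" for Y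
  proof -
    have "outdeg D v = card {e\<in>D-Y. fst e = v} + card {e\<in>Y. fst e = v}" for v
    proof -
      have "{e\<in>D. fst e = v} = {e\<in>D-Y. fst e = v} \<union> {e\<in>Y. fst e = v}" using YD by auto
      moreover have "finite {e\<in>D-Y. fst e = v}" "finite {e\<in>Y. fst e = v}"
        using finD YD by (auto intro: finite_subset)
      ultimately show ?thesis unfolding outdeg_def card_out_fst by (simp add: card_Un_disjoint disjoint_iff)
    qed
    hence "outA D Y v = outdeg D v \<longleftrightarrow> outdeg Y v = indeg Y v" for v
    proof -
      assume h: "\<And>v. outdeg D v = card {e\<in>D-Y. fst e = v} + card {e\<in>Y. fst e = v}"
      have "outA D Y v = card {e\<in>D-Y. fst e = v} + card {e\<in>Y. snd e = v}" by (simp add: outA_def)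
      moreover have "outdeg Y v = card {e\<in>Y. fst e = v}" by (simp add: outdeg_def card_out_fst)
      moreover have "indeg Y v = card {e\<in>Y. snd e = v}" by (simp add: indeg_def card_in_snd)
      ultimately show ?thesis using h[of v] by linarith
    qed
    thus ?thesis by simp
  qed
  define eul where "eul = eulerian_subgraphs V D"
  have eulsub: "eul \<subseteq> Pow D" by (auto simp: eul_def eulerian_subgraphs_def)
  have fineul: "finite eul" using eulsub finD by (meson finite_Pow_iff finite_subset)
  have "cf (arcsIn D V) V (outdeg D) = (\<Sum>Y\<in>Pow D. if Y \<in> eul then (-1)^card Y else 0)"
    unfolding aD cf_def
    by (rule sum.cong[OF refl]) (auto simp: key eul_def eulerian_subgraphs_def)
  also have "\<dots> = (\<Sum>Y\<in>eul. (-1::int)^card Y)"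
    by (rule sum.mono_neutral_cong_right) (use finD eulsub in auto)
  also have "\<dots> = (\<Sum>Y\<in>{H\<in>eul. even (card H)}. (-1::int)^card Y) + (\<Sum>Y\<in>{H\<in>eul. odd (card H)}. (-1::int)^card Y)"
    by (rule sum_Un_eq[symmetric]) (use fineul in auto)
  also have "\<dots> = int (EE V D) - int (EO V D)"
    by (simp add: EE_def EO_def eul_def)
  finally show ?thesis using at by (simp add: AT_orientation_def)
qed




definition Orient :: "'a set set \<Rightarrow> ('a \<times> 'a) set \<Rightarrow> bool" where
  "Orient F B \<longleftrightarrow> (\<forall>(x,y)\<in>B. {x,y} \<in> F) \<and> (\<forall>x y. {x,y} \<in> F \<longrightarrow> ((x,y) \<in> B \<longleftrightarrow> (y,x) \<notin> B))"

definition nbF :: "'a set set \<Rightarrow> 'a \<Rightarrow> 'a set" where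
  "nbF F z = {w. {z,w} \<in> F}"

definition outB :: "('a \<times> 'a) set \<Rightarrow> 'a \<Rightarrow> 'a set" where
  "outB B z = {w. (z,w) \<in> B}"

lemma finite_nbF: "finite F \<Longrightarrow> finite (nbF F z)"
proof -
  assume fF: "finite F"
  have "inj_on (\<lambda>w. {z,w}) (nbF F z)" by (auto simp: inj_on_def doubleton_eq_iff)
  moreover have "(\<lambda>w. {z,w}) ` nbF F z \<subseteq> F" by (auto simp: nbF_def)
  ultimately show ?thesis using fF by (meson finite_imageD finite_subset)
qed

lemma outB_sub: "Orient F B \<Longrightarrow> outB B z \<subseteq> nbF F z"
  by (auto simp: Orient_def outB_def nbF_def)

lemma finite_outB: "finite F \<Longrightarrow> Orient F B \<Longrightarrow> finite (outB B z)"
  using finite_nbF outB_sub finite_subset by metis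

lemma Orient_arc: "Orient F B \<Longrightarrow> (a,b) \<in> B \<Longrightarrow> {a,b} \<in> F"
  unfolding Orient_def by blast

lemma Orient_iff: "Orient F B \<Longrightarrow> {a,b} \<in> F \<Longrightarrow> ((a,b) \<in> B \<longleftrightarrow> (b,a) \<notin> B)"
  unfolding Orient_def by blast

lemma OrientI:
  assumes "\<And>a b. (a,b) \<in> B \<Longrightarrow> {a,b} \<in> F" "\<And>a b. {a,b} \<in> F \<Longrightarrow> ((a,b) \<in> B \<longleftrightarrow> (b,a) \<notin> B)"
  shows "Orient F B"
  unfolding Orient_def using assms by blast

lemma add_edge:
  assumes O: "Orient F B" and nin: "{x,y} \<notin> F" and xy: "x \<noteq> y" and fF: "finite F"
  shows "Orient (insert {x,y} F) (insert (x,y) B)"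
    and "card (nbF (insert {x,y} F) z) = card (nbF F z) + (if z = x \<or> z = y then 1 else 0)"
    and "card (outB (insert (x,y) B) z) = card (outB B z) + (if z = x then 1 else 0)"
proof -
  have sw: "{y,x} = {x,y}" by blast
  have noB1: "(x,y) \<notin> B" using Orient_arc[OF O, of x y] nin by blast
  have noB2: "(y,x) \<notin> B" using Orient_arc[OF O, of y x] nin sw by auto
  show "Orient (insert {x,y} F) (insert (x,y) B)"
  proof (rule OrientI)
    fix a b assume "(a,b) \<in> insert (x,y) B"
    thus "{a,b} \<in> insert {x,y} F"
    proof
      assume "(a,b) = (x,y)" thus ?thesis by simp
    next
      assume "(a,b) \<in> B" thus ?thesis using Orient_arc[OF O] by blast
    qed
  next
    fix a b assume ab: "{a,b} \<in> insert {x,y} F"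
    show "((a,b) \<in> insert (x,y) B) = ((b,a) \<notin> insert (x,y) B)"
    proof (cases "{a,b} = {x,y}")
      case True
      hence "(a = x \<and> b = y) \<or> (a = y \<and> b = x)" by (simp add: doubleton_eq_iff)
      then show ?thesis
      proof
        assume "a = x \<and> b = y" thus ?thesis using noB1 noB2 xy by simp
      next
        assume "a = y \<and> b = x" thus ?thesis using noB1 noB2 xy by simp
      qed
    next
      case False
      hence abF: "{a,b} \<in> F" using ab by simp
      have ne: "(a,b) \<noteq> (x,y)" "(b,a) \<noteq> (x,y)" using False sw by auto
      show ?thesis using Orient_iff[OF O abF] ne by blast
    qed
  qed
  have fin: "finite (nbF F z)" by (rule finite_nbF[OF fF])
  have finO: "finite (outB B z)" by (rule finite_outB[OF fF O])
  show "card (nbF (insert {x,y} F) z) = card (nbF F z) + (if z = x \<or> z = y then 1 else 0)"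
  proof (cases "z = x \<or> z = y")
    case True
    then obtain w where w: "{z,w} = {x,y}" "z \<noteq> w" using xy sw by blast
    have "nbF (insert {x,y} F) z = insert w (nbF F z)"
    proof
      show "nbF (insert {x,y} F) z \<subseteq> insert w (nbF F z)"
      proof
        fix u assume "u \<in> nbF (insert {x,y} F) z"
        hence "{z,u} = {z,w} \<or> {z,u} \<in> F" using w by (simp add: nbF_def)
        thus "u \<in> insert w (nbF F z)"
        proof
          assume "{z,u} = {z,w}" hence "u = w" by (simp add: doubleton_eq_iff) blast
          thus ?thesis by simp
        next
          assume "{z,u} \<in> F" thus ?thesis by (simp add: nbF_def)
        qed
      qed
    next
      show "insert w (nbF F z) \<subseteq> nbF (insert {x,y} F) z" using w by (auto simp: nbF_def)
    qed
    moreover have "w \<notin> nbF F z" using w nin by (simp add: nbF_def)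
    ultimately show ?thesis using True fin by simp
  next
    case False
    have "nbF (insert {x,y} F) z = nbF F z"
    proof -
      have "{z,u} \<noteq> {x,y}" for u using False by (simp add: doubleton_eq_iff)
      thus ?thesis by (simp add: nbF_def)
    qed
    thus ?thesis using False by simp
  qed
  show "card (outB (insert (x,y) B) z) = card (outB B z) + (if z = x then 1 else 0)"
  proof (cases "z = x")
    case True
    hence "outB (insert (x,y) B) z = insert y (outB B z)" by (auto simp: outB_def)
    moreover have "y \<notin> outB B z" using True noB1 by (simp add: outB_def)
    ultimately show ?thesis using True finO by simp
  next
    case False
    hence "outB (insert (x,y) B) z = outB B z" by (auto simp: outB_def)
    thus ?thesis using False by simp
  qed
qed

lemma del_edge:
  assumes O: "Orient F B" and xyB: "(x,y) \<in> B"
  shows "Orient (F - {{x,y}}) (B - {(x,y)})"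
proof -
  have xyF: "{x,y} \<in> F" using Orient_arc[OF O xyB] .
  have yx: "(y,x) \<notin> B" using Orient_iff[OF O xyF] xyB by blast
  show ?thesis
  proof (rule OrientI)
    fix a b assume p: "(a,b) \<in> B - {(x,y)}"
    have "{a,b} \<in> F" using Orient_arc[OF O] p by blast
    moreover have "{a,b} \<noteq> {x,y}"
    proof
      assume "{a,b} = {x,y}"
      hence "(a = x \<and> b = y) \<or> (a = y \<and> b = x)" by (simp add: doubleton_eq_iff)
      thus False using p yx by blast
    qed
    ultimately show "{a,b} \<in> F - {{x,y}}" by simp
  next
    fix a b assume ab: "{a,b} \<in> F - {{x,y}}"
    hence "{a,b} \<in> F" by simp
    hence i: "((a,b) \<in> B) = ((b,a) \<notin> B)" using Orient_iff[OF O] by blast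
    have "{b,a} = {a,b}" by blast
    hence "(a,b) \<noteq> (x,y)" "(b,a) \<noteq> (x,y)" using ab by auto
    thus "((a,b) \<in> B - {(x,y)}) = ((b,a) \<notin> B - {(x,y)})" using i by blast
  qed
qed

lemma exists_Orient:
  assumes "finite F" "\<forall>e\<in>F. \<exists>a b. a \<noteq> b \<and> e = {a,b}"
  shows "\<exists>B. Orient F B"
  using assms
proof (induction F rule: finite_induct)
  case empty
  show ?case by (rule exI[of _ "{}"]) (simp add: Orient_def)
next
  case (insert e F)
  then obtain B where B: "Orient F B" by auto
  obtain x y where xy: "x \<noteq> y" "e = {x,y}" using insert.prems by auto
  show ?case using add_edge(1)[OF B _ xy(1) insert.hyps(1)] insert.hyps(2) xy(2) by blast
qed

lemma balanced:
  assumes "finite F" "\<forall>e\<in>F. \<exists>a b. a \<noteq> b \<and> e = {a,b}"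
  shows "\<exists>B. Orient F B \<and> (\<forall>z. 2 * card (outB B z) \<le> card (nbF F z) + 1)"
  using assms
proof (induction "card F" arbitrary: F rule: less_induct)
  case less
  note fF = less.prems(1) and two = less.prems(2)
  show ?case
  proof (cases "\<exists>v a b. a \<noteq> b \<and> {v,a} \<in> F \<and> {v,b} \<in> F")
    case False
    obtain B where B: "Orient F B" using exists_Orient[OF fF two] by blast
    have "2 * card (outB B z) \<le> card (nbF F z) + 1" for z
    proof -
      have le1: "card (nbF F z) \<le> 1"
      proof (rule ccontr)
        assume "\<not> card (nbF F z) \<le> 1"
        hence "\<not> (\<forall>x\<in>nbF F z. \<forall>y\<in>nbF F z. x = y)"
          using card_le_Suc0_iff_eq[OF finite_nbF[OF fF]] by simp
        then obtain a b where "a \<in> nbF F z" "b \<in> nbF F z" "a \<noteq> b" by blast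
        thus False using False by (auto simp: nbF_def)
      qed
      have "card (outB B z) \<le> card (nbF F z)"
        by (rule card_mono[OF finite_nbF[OF fF] outB_sub[OF B]])
      thus ?thesis using le1 by linarith
    qed
    thus ?thesis using B by blast
  next
    case True
    then obtain v a b where vab: "a \<noteq> b" "{v,a} \<in> F" "{v,b} \<in> F" by blast
    have va: "v \<noteq> a" using two vab(2) by (metis doubleton_eq_iff)
    have vb: "v \<noteq> b" using two vab(3) by (metis doubleton_eq_iff)
    note ne = vab(1) va vb vab(1)[symmetric] va[symmetric] vb[symmetric]
    show ?thesis
    proof (cases "{a,b} \<in> F")
      case True
      define F' where "F' = F - {{v,a},{v,b},{a,b}}"
      have fF': "finite F'" using fF by (simp add: F'_def)
      have lt: "card F' < card F" unfolding F'_def using fF vab by (intro psubset_card_mono) auto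
      obtain B' where B': "Orient F' B'" and bal: "\<forall>z. 2 * card (outB B' z) \<le> card (nbF F' z) + 1"
        using less.hyps[OF lt fF'] two by (auto simp: F'_def)
      have bv: "{b,v} = {v,b}" by blast
      define F1 where "F1 = insert {b,v} F'"
      define B1 where "B1 = insert (b,v) B'"
      have n1: "{b,v} \<notin> F'" unfolding bv by (simp add: F'_def)
      note e1 = add_edge[OF B' n1 vb[symmetric] fF', folded F1_def B1_def]
      have fF1: "finite F1" using fF' by (simp add: F1_def)
      have n2: "{a,b} \<notin> F1" using ne by (simp add: F1_def F'_def doubleton_eq_iff)
      define F2 where "F2 = insert {a,b} F1"
      define B2 where "B2 = insert (a,b) B1"
      note e2 = add_edge[OF e1(1) n2 vab(1) fF1, folded F2_def B2_def]
      have fF2: "finite F2" using fF1 by (simp add: F2_def)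
      have n3: "{v,a} \<notin> F2" using ne by (simp add: F2_def F1_def F'_def doubleton_eq_iff)
      define F3 where "F3 = insert {v,a} F2"
      define B3 where "B3 = insert (v,a) B2"
      note e3 = add_edge[OF e2(1) n3 va fF2, folded F3_def B3_def]
      have F3F: "F3 = F"
      proof -
        have "F3 = insert {v,a} (insert {a,b} (insert {v,b} F'))" unfolding F3_def F2_def F1_def bv ..
        also have "\<dots> = F" unfolding F'_def using vab True by blast
        finally show ?thesis .
      qed
      have "2 * card (outB B3 z) \<le> card (nbF F3 z) + 1" for z
      proof -
        have b: "2 * card (outB B' z) \<le> card (nbF F' z) + 1" using bal by blast
        show ?thesis
        proof (cases "z = v \<or> z = a \<or> z = b")
          case True
          then show ?thesis using e1(2,3)[of z] e2(2,3)[of z] e3(2,3)[of z] b ne by auto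
        next
          case False
          then show ?thesis using e1(2,3)[of z] e2(2,3)[of z] e3(2,3)[of z] b by auto
        qed
      qed
      thus ?thesis using e3(1) F3F by blast
    next
      case False
      define F0 where "F0 = F - {{v,a},{v,b}}"
      define F' where "F' = insert {a,b} F0"
      have fF0: "finite F0" using fF by (simp add: F0_def)
      have fF': "finite F'" using fF0 by (simp add: F'_def)
      have nab: "{a,b} \<notin> F0" using False by (simp add: F0_def)
      have cF': "card F' = Suc (card F0)" using fF0 nab by (simp add: F'_def)
      have sub2: "{{v,a},{v,b}} \<subseteq> F" using vab by auto
      have c2: "card {{v,a},{v,b}} = 2" using ne by (simp add: doubleton_eq_iff)
      have "card F0 = card F - 2" unfolding F0_def using card_Diff_subset[OF _ sub2] c2 by simp
      moreover have "card F \<ge> 2" using card_mono[OF fF sub2] c2 by simp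
      ultimately have lt: "card F' < card F" using cF' by simp
      have two': "\<forall>e\<in>F'. \<exists>a b. a \<noteq> b \<and> e = {a,b}" using two vab(1) by (auto simp: F'_def F0_def)
      obtain B' where B': "Orient F' B'" and bal: "\<forall>z. 2 * card (outB B' z) \<le> card (nbF F' z) + 1"
        using less.hyps[OF lt fF' two'] by blast
      have abF': "{a,b} \<in> F'" by (simp add: F'_def)
      have ba: "{b,a} = {a,b}" by blast
      obtain x y where xy: "{x,y} = {a,b}" "(x,y) \<in> B'"
      proof (cases "(a,b) \<in> B'")
        case True then show ?thesis using that by blast
      next
        case False
        hence "(b,a) \<in> B'" using Orient_iff[OF B' abF'] by blast
        then show ?thesis using that[of b a] ba by blast
      qed
      have xycase: "(x = a \<and> y = b) \<or> (x = b \<and> y = a)" using xy(1) by (simp add: doubleton_eq_iff)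
      have xyne: "x \<noteq> y" using xycase ne by blast
      have vx: "v \<noteq> x" "v \<noteq> y" using xycase ne by blast+
      note ne2 = xyne vx xyne[symmetric] vx(1)[symmetric] vx(2)[symmetric]
      have F'F0: "F' - {{x,y}} = F0" using xy(1) nab by (auto simp: F'_def)
      define B0 where "B0 = B' - {(x,y)}"
      have O0: "Orient F0 B0" using del_edge[OF B' xy(2)] F'F0 by (simp add: B0_def)
      have nxy: "{x,y} \<notin> F0" using xy(1) nab by simp
      have F'eq: "F' = insert {x,y} F0" using xy(1) by (simp add: F'_def)
      have B'eq: "B' = insert (x,y) B0" using xy(2) by (auto simp: B0_def)
      note e0 = add_edge[OF O0 nxy xyne fF0, folded F'eq B'eq]
      have n1: "{v,y} \<notin> F0" using xycase by (auto simp: F0_def)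
      define F1 where "F1 = insert {v,y} F0"
      define B1 where "B1 = insert (v,y) B0"
      note e1 = add_edge[OF O0 n1 vx(2) fF0, folded F1_def B1_def]
      have fF1: "finite F1" using fF0 by (simp add: F1_def)
      have xv: "{x,v} = {v,x}" by blast
      have n2: "{x,v} \<notin> F1" unfolding xv using xycase ne2 by (auto simp: F1_def F0_def doubleton_eq_iff)
      define F2 where "F2 = insert {x,v} F1"
      define B2 where "B2 = insert (x,v) B1"
      note e2 = add_edge[OF e1(1) n2 vx(1)[symmetric] fF1, folded F2_def B2_def]
      have F2F: "F2 = F"
      proof -
        have "F2 = insert {v,x} (insert {v,y} F0)" unfolding F2_def F1_def xv ..
        also have "\<dots> = F" unfolding F0_def using xycase vab by blast
        finally show ?thesis .
      qed
      have "2 * card (outB B2 z) \<le> card (nbF F2 z) + 1" for z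
      proof -
        have b: "2 * card (outB B' z) \<le> card (nbF F' z) + 1" using bal by blast
        show ?thesis
        proof (cases "z = v \<or> z = x \<or> z = y")
          case True
          then show ?thesis using e0(2,3)[of z] e1(2,3)[of z] e2(2,3)[of z] b ne2 by auto
        next
          case False
          then show ?thesis using e0(2,3)[of z] e1(2,3)[of z] e2(2,3)[of z] b by auto
        qed
      qed
      thus ?thesis using e2(1) F2F by blast
    qed
  qed
qed




definition own :: "'a set set \<Rightarrow> 'a set \<Rightarrow> 'a \<Rightarrow> nat" where
  "own E P v = card {w\<in>P. {v,w} \<in> E}"

lemma card_filter_sum: "finite A \<Longrightarrow> card {x\<in>A. P x} = (\<Sum>x\<in>A. if P x then 1 else 0)"
  using sum.inter_filter[of A "\<lambda>_. 1::nat" P, symmetric] by simp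

lemma handshake_step:
  assumes fP: "finite P" and vP: "v \<in> P" and noloop: "{v} \<notin> E"
  shows "(\<Sum>u\<in>P. own E P u) = (\<Sum>u\<in>P-{v}. own E (P-{v}) u) + 2 * own E P v"
proof -
  have 1: "(\<Sum>u\<in>P. own E P u) = own E P v + (\<Sum>u\<in>P-{v}. own E P u)"
    using fP vP by (simp add: sum.remove)
  have 2: "own E P u = own E (P-{v}) u + (if {u,v} \<in> E then 1 else 0)" if "u \<in> P - {v}" for u
  proof (cases "{u,v} \<in> E")
    case True
    have "{w\<in>P. {u,w} \<in> E} = insert v {w\<in>P-{v}. {u,w} \<in> E}" using True vP by auto
    moreover have "finite {w\<in>P-{v}. {u,w} \<in> E}" using fP by simp
    ultimately show ?thesis using True by (simp add: own_def)
  next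
    case False
    have "{w\<in>P. {u,w} \<in> E} = {w\<in>P-{v}. {u,w} \<in> E}" using False by auto
    thus ?thesis using False by (simp add: own_def)
  qed
  have 3: "(\<Sum>u\<in>P-{v}. (if {u,v} \<in> E then 1 else 0)) = own E P v"
  proof -
    have "(\<Sum>u\<in>P-{v}. (if {u,v} \<in> E then 1 else 0)) = card {u\<in>P-{v}. {u,v} \<in> E}"
      using card_filter_sum[of "P-{v}" "\<lambda>u. {u,v} \<in> E"] fP by simp
    also have "{u\<in>P-{v}. {u,v} \<in> E} = {w\<in>P. {v,w} \<in> E}"
    proof (intro equalityI subsetI)
      fix w assume "w \<in> {u\<in>P-{v}. {u,v} \<in> E}"
      thus "w \<in> {w\<in>P. {v,w} \<in> E}" by (simp add: insert_commute)
    next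
      fix w assume w: "w \<in> {w\<in>P. {v,w} \<in> E}"
      hence "w \<noteq> v" using noloop by auto
      thus "w \<in> {u\<in>P-{v}. {u,v} \<in> E}" using w by (simp add: insert_commute)
    qed
    finally show ?thesis by (simp add: own_def)
  qed
  have "(\<Sum>u\<in>P-{v}. own E P u) = (\<Sum>u\<in>P-{v}. own E (P-{v}) u) + own E P v"
    using 2 3 by (simp add: sum.distrib)
  thus ?thesis using 1 by simp
qed

lemma degen:
  fixes g :: "'a \<Rightarrow> real"
  assumes "finite P" "P \<noteq> {}" "\<forall>u. {u} \<notin> E"
    and "\<forall>Q\<subseteq>P. Q \<noteq> {} \<longrightarrow> (\<exists>v\<in>Q. real (own E Q v) < g v)"
  shows "(\<Sum>u\<in>P. real (own E P u)) < 2 * (\<Sum>u\<in>P. g u)"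
  using assms
proof (induction "card P" arbitrary: P rule: less_induct)
  case less
  obtain v where vP: "v \<in> P" and vg: "real (own E P v) < g v" using less.prems(2,4) by blast
  define P' where "P' = P - {v}"
  have hs: "(\<Sum>u\<in>P. own E P u) = (\<Sum>u\<in>P'. own E P' u) + 2 * own E P v"
    unfolding P'_def by (rule handshake_step[OF less.prems(1) vP]) (use less.prems(3) in auto)
  hence hsr: "(\<Sum>u\<in>P. real (own E P u)) = (\<Sum>u\<in>P'. real (own E P' u)) + 2 * real (own E P v)"
  proof -
    have "real (\<Sum>u\<in>P. own E P u) = real ((\<Sum>u\<in>P'. own E P' u) + 2 * own E P v)" using hs by simp
    thus ?thesis by (simp add: of_nat_sum)
  qed
  have gs: "(\<Sum>u\<in>P. g u) = g v + (\<Sum>u\<in>P'. g u)"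
    unfolding P'_def using less.prems(1) vP by (simp add: sum.remove)
  show ?case
  proof (cases "P' = {}")
    case True
    have "0 \<le> real (own E P v)" by simp
    thus ?thesis using hsr gs True vg by simp
  next
    case False
    have lt: "card P' < card P" unfolding P'_def by (rule card_Diff1_less[OF less.prems(1) vP])
    have "(\<Sum>u\<in>P'. real (own E P' u)) < 2 * (\<Sum>u\<in>P'. g u)"
      by (rule less.hyps[OF lt]) (use less.prems False in \<open>auto simp: P'_def\<close>)
    thus ?thesis using hsr gs vg by simp
  qed
qed

lemma count_pairs2:
  fixes a b r :: nat
  assumes "a < r" "b < r" "a \<noteq> b"
  shows "(\<Sum>i<r. \<Sum>j<r. if (a = i \<or> a = j) \<and> (b = i \<or> b = j) then 1 else 0) = (2::real)"
proof -
  have "(\<Sum>j<r. if (a = i \<or> a = j) \<and> (b = i \<or> b = j) then 1 else 0)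
      = (if i = a then 1 else 0) + (if i = b then (1::real) else 0)" for i
  proof -
    have eq: "(\<lambda>j. if (a = i \<or> a = j) \<and> (b = i \<or> b = j) then 1 else 0)
        = (\<lambda>j. (if i = a then (if j = b then 1 else 0) else 0) + (if i = b then (if j = a then (1::real) else 0) else 0))"
      using assms(3) by (intro ext) auto
    have "(\<Sum>j<r. if (a = i \<or> a = j) \<and> (b = i \<or> b = j) then 1 else 0)
        = (\<Sum>j<r. (if i = a then (if j = b then 1 else 0) else 0) + (if i = b then (if j = a then (1::real) else 0) else 0))"
      by (simp only: eq)
    also have "\<dots> = (if i = a then 1 else 0) + (if i = b then (1::real) else 0)"
      using assms by (simp add: sum.distrib)
    finally show ?thesis .
  qed
  hence "(\<Sum>i<r. \<Sum>j<r. if (a = i \<or> a = j) \<and> (b = i \<or> b = j) then 1 else 0)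
      = (\<Sum>i<r. (if i = a then 1 else 0) + (if i = b then (1::real) else 0))" by simp
  also have "\<dots> = 2" using assms by (simp add: sum.distrib)
  finally show ?thesis .
qed

lemma count_pairs1:
  fixes a r :: nat
  assumes "a < r"
  shows "(\<Sum>i<r. \<Sum>j<r. if a = i \<or> a = j then 1 else 0) = (2 * real r - 1)"
proof -
  have "(\<Sum>j<r. if a = i \<or> a = j then 1 else 0) = (if i = a then real r else 1)" for i
  proof (cases "i = a")
    case True then show ?thesis by simp
  next
    case False
    have eq: "(\<lambda>j. if a = i \<or> a = j then 1 else 0) = (\<lambda>j. if j = a then (1::real) else 0)"
      using False by (intro ext) auto
    have "(\<Sum>j<r. if a = i \<or> a = j then 1 else 0) = (\<Sum>j<r. if j = a then (1::real) else 0)"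
      by (simp only: eq)
    thus ?thesis using False assms by simp
  qed
  hence "(\<Sum>i<r. \<Sum>j<r. if a = i \<or> a = j then 1 else 0) = (\<Sum>i<r. if i = a then real r else 1)" by simp
  also have "\<dots> = real r + (real r - 1)"
  proof -
    have "(\<Sum>i<r. if i = a then real r else 1) = (\<Sum>i<r. (if i = a then real r - 1 else 0) + 1)"
      by (rule sum.cong) auto
    also have "\<dots> = real r - 1 + real r" using assms by (simp add: sum.distrib)
    finally show ?thesis by simp
  qed
  finally show ?thesis by simp
qed




lemma swap4:
  "(\<Sum>i\<in>A. \<Sum>j\<in>B. \<Sum>v\<in>C. \<Sum>w\<in>D. f i j v w) = (\<Sum>v\<in>C. \<Sum>w\<in>D. \<Sum>i\<in>A. \<Sum>j\<in>B. f i j v w)"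
proof -
  have "(\<Sum>i\<in>A. \<Sum>j\<in>B. \<Sum>v\<in>C. \<Sum>w\<in>D. f i j v w) = (\<Sum>i\<in>A. \<Sum>v\<in>C. \<Sum>j\<in>B. \<Sum>w\<in>D. f i j v w)"
    by (rule sum.cong[OF refl], rule sum.swap)
  also have "\<dots> = (\<Sum>v\<in>C. \<Sum>i\<in>A. \<Sum>j\<in>B. \<Sum>w\<in>D. f i j v w)"
    by (rule sum.swap)
  also have "\<dots> = (\<Sum>v\<in>C. \<Sum>i\<in>A. \<Sum>w\<in>D. \<Sum>j\<in>B. f i j v w)"
    by (rule sum.cong[OF refl], rule sum.cong[OF refl], rule sum.swap)
  also have "\<dots> = (\<Sum>v\<in>C. \<Sum>w\<in>D. \<Sum>i\<in>A. \<Sum>j\<in>B. f i j v w)"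
    by (rule sum.cong[OF refl], rule sum.swap)
  finally show ?thesis .
qed

locale gctx =
  fixes V :: "'a set" and E :: "'a set set" and col :: "'a \<Rightarrow> nat" and r d :: nat and c :: real
  assumes sg: "simple_graph V E"
    and colr: "\<forall>v\<in>V. col v < r"
    and colE: "\<forall>u v. {u,v} \<in> E \<longrightarrow> col u \<noteq> col v"
    and degd: "\<forall>v\<in>V. own E V v \<le> d"
    and key: "\<forall>x::nat. x \<le> d \<longrightarrow> (2 * real r - 1) * (2 * (real x - c) - 1) \<le> real x"
begin

lemma finV: "finite V" using sg by (simp add: simple_graph_def)

lemma noloop: "{u} \<notin> E"
proof
  assume "{u} \<in> E"
  then obtain a b where "{u} = {a,b}" "a \<noteq> b" using sg unfolding simple_graph_def by blast
  thus False by (metis doubleton_eq_iff insert_absorb2)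
qed

lemma exists_P:
  assumes UV: "U \<subseteq> V" and Une: "U \<noteq> {}"
  shows "\<exists>i j P. P \<subseteq> U \<and> P \<noteq> {} \<and> (\<forall>v\<in>P. col v = i \<or> col v = j) \<and>
           (\<forall>v\<in>P. 2 * (real (own E U v) - c) - 1 \<le> real (own E P v))"
proof (rule ccontr)
  assume nh: "\<not> ?thesis"
  define g where "g v = 2 * (real (own E U v) - c) - 1" for v
  define H where "H i j = {v\<in>U. col v = i \<or> col v = j}" for i j
  have finU: "finite U" using UV finV finite_subset by auto
  have finH: "finite (H i j)" for i j using finU by (simp add: H_def)
  have degH: "\<forall>Q\<subseteq>H i j. Q \<noteq> {} \<longrightarrow> (\<exists>v\<in>Q. real (own E Q v) < g v)" for i j
  proof (intro allI impI)
    fix Q assume Q: "Q \<subseteq> H i j" "Q \<noteq> {}"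
    show "\<exists>v\<in>Q. real (own E Q v) < g v"
    proof (rule ccontr)
      assume "\<not> (\<exists>v\<in>Q. real (own E Q v) < g v)"
      hence "\<forall>v\<in>Q. 2 * (real (own E U v) - c) - 1 \<le> real (own E Q v)" by (auto simp: g_def not_less)
      moreover have "Q \<subseteq> U" "\<forall>v\<in>Q. col v = i \<or> col v = j" using Q by (auto simp: H_def)
      ultimately show False using nh Q by blast
    qed
  qed
  have le_ij: "(\<Sum>v\<in>H i j. real (own E (H i j) v)) \<le> 2 * (\<Sum>v\<in>H i j. g v)" for i j
  proof (cases "H i j = {}")
    case True then show ?thesis by simp
  next
    case False
    show ?thesis using degen[OF finH False _ degH] noloop by fastforce
  qed
  obtain v0 where v0: "v0 \<in> U" using Une by blast
  have v0r: "col v0 < r" using v0 UV colr by auto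
  have lt_0: "(\<Sum>v\<in>H (col v0) (col v0). real (own E (H (col v0) (col v0)) v)) < 2 * (\<Sum>v\<in>H (col v0) (col v0). g v)"
  proof -
    have "H (col v0) (col v0) \<noteq> {}" using v0 by (auto simp: H_def)
    thus ?thesis using degen[OF finH _ _ degH] noloop by blast
  qed
  define T1 where "T1 = (\<Sum>i<r. \<Sum>j<r. \<Sum>v\<in>H i j. real (own E (H i j) v))"
  define T2 where "T2 = (\<Sum>i<r. \<Sum>j<r. 2 * (\<Sum>v\<in>H i j. g v))"
  have T12: "T1 < T2" unfolding T1_def T2_def
  proof (rule sum_strict_mono_ex1)
    show "finite {..<r}" by simp
    show "\<forall>i\<in>{..<r}. (\<Sum>j<r. \<Sum>v\<in>H i j. real (own E (H i j) v)) \<le> (\<Sum>j<r. 2 * (\<Sum>v\<in>H i j. g v))"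
      using le_ij by (simp add: sum_mono)
    have "(\<Sum>j<r. \<Sum>v\<in>H (col v0) j. real (own E (H (col v0) j) v)) < (\<Sum>j<r. 2 * (\<Sum>v\<in>H (col v0) j. g v))"
    proof (rule sum_strict_mono_ex1)
      show "finite {..<r}" by simp
      show "\<forall>j\<in>{..<r}. (\<Sum>v\<in>H (col v0) j. real (own E (H (col v0) j) v)) \<le> 2 * (\<Sum>v\<in>H (col v0) j. g v)"
        using le_ij by simp
      show "\<exists>j\<in>{..<r}. (\<Sum>v\<in>H (col v0) j. real (own E (H (col v0) j) v)) < 2 * (\<Sum>v\<in>H (col v0) j. g v)"
        using lt_0 v0r by blast
    qed
    thus "\<exists>i\<in>{..<r}. (\<Sum>j<r. \<Sum>v\<in>H i j. real (own E (H i j) v)) < (\<Sum>j<r. 2 * (\<Sum>v\<in>H i j. g v))"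
      using v0r by blast
  qed
  have ownH: "real (own E (H i j) v) = (\<Sum>w\<in>U. if (col w = i \<or> col w = j) \<and> {v,w} \<in> E then 1 else 0)" for i j v
  proof -
    have "{w\<in>H i j. {v,w} \<in> E} = {w\<in>U. (col w = i \<or> col w = j) \<and> {v,w} \<in> E}" by (auto simp: H_def)
    hence "own E (H i j) v = (\<Sum>w\<in>U. if (col w = i \<or> col w = j) \<and> {v,w} \<in> E then 1 else 0)"
      unfolding own_def using card_filter_sum[OF finU] by simp
    thus ?thesis by (simp add: of_nat_sum if_distrib cong: if_cong)
  qed
  have sH: "(\<Sum>v\<in>H i j. f v) = (\<Sum>v\<in>U. if col v = i \<or> col v = j then f v else 0)" for i j and f :: "'a \<Rightarrow> real"
    unfolding H_def by (rule sum.inter_filter[OF finU])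
  have T1eq: "T1 = (\<Sum>i<r. \<Sum>j<r. \<Sum>v\<in>U. \<Sum>w\<in>U.
      if (col v = i \<or> col v = j) \<and> (col w = i \<or> col w = j) \<and> {v,w} \<in> E then 1 else (0::real))"
    unfolding T1_def sH ownH by (intro sum.cong refl) auto
  also have "\<dots> = (\<Sum>v\<in>U. \<Sum>w\<in>U. \<Sum>i<r. \<Sum>j<r.
      if (col v = i \<or> col v = j) \<and> (col w = i \<or> col w = j) \<and> {v,w} \<in> E then 1 else (0::real))"
    by (rule swap4)
  also have "\<dots> = (\<Sum>v\<in>U. \<Sum>w\<in>U. if {v,w} \<in> E then 2 else 0)"
  proof (intro sum.cong refl)
    fix v w assume vU: "v \<in> U" and wU: "w \<in> U"
    show "(\<Sum>i<r. \<Sum>j<r. if (col v = i \<or> col v = j) \<and> (col w = i \<or> col w = j) \<and> {v,w} \<in> E then 1 else (0::real))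
        = (if {v,w} \<in> E then 2 else 0)"
    proof (cases "{v,w} \<in> E")
      case True
      have "col v \<noteq> col w" using colE True by blast
      moreover have "col v < r" "col w < r" using vU wU UV colr by auto
      ultimately show ?thesis using count_pairs2[of "col v" r "col w"] True by simp
    next
      case False then show ?thesis by simp
    qed
  qed
  also have "\<dots> = (\<Sum>v\<in>U. 2 * real (own E U v))"
  proof (intro sum.cong refl)
    fix v assume "v \<in> U"
    have "real (own E U v) = (\<Sum>w\<in>U. if {v,w} \<in> E then 1 else 0)"
      unfolding own_def using card_filter_sum[OF finU, of "\<lambda>w. {v,w} \<in> E"] by (simp add: of_nat_sum if_distrib cong: if_cong)
    thus "(\<Sum>w\<in>U. if {v,w} \<in> E then 2 else 0) = 2 * real (own E U v)"
      by (simp add: sum_distrib_left if_distrib cong: if_cong)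
  qed
  finally have T1v: "T1 = (\<Sum>v\<in>U. 2 * real (own E U v))" .
  have "T2 = 2 * (\<Sum>i<r. \<Sum>j<r. \<Sum>v\<in>U. \<Sum>w\<in>{()}. if col v = i \<or> col v = j then g v else 0)"
    unfolding T2_def sH by (simp add: sum_distrib_left)
  also have "(\<Sum>i<r. \<Sum>j<r. \<Sum>v\<in>U. \<Sum>w\<in>{()}. if col v = i \<or> col v = j then g v else 0)
      = (\<Sum>v\<in>U. \<Sum>w\<in>{()}. \<Sum>i<r. \<Sum>j<r. if col v = i \<or> col v = j then g v else 0)"
    by (rule swap4)
  also have "\<dots> = (\<Sum>v\<in>U. (2 * real r - 1) * g v)"
  proof (intro sum.cong refl)
    fix v assume "v \<in> U"
    hence vr: "col v < r" using UV colr by auto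
    have "(\<Sum>i<r. \<Sum>j<r. if col v = i \<or> col v = j then g v else 0)
        = g v * (\<Sum>i<r. \<Sum>j<r. if col v = i \<or> col v = j then 1 else 0)"
      by (simp add: sum_distrib_left if_distrib cong: if_cong)
    also have "\<dots> = g v * (2 * real r - 1)" using count_pairs1[OF vr] by simp
    finally show "(\<Sum>w\<in>{()}. \<Sum>i<r. \<Sum>j<r. if col v = i \<or> col v = j then g v else 0) = (2 * real r - 1) * g v"
      by simp
  qed
  finally have T2v: "T2 = 2 * (\<Sum>v\<in>U. (2 * real r - 1) * g v)" .
  have "(\<Sum>v\<in>U. (2 * real r - 1) * g v) \<le> (\<Sum>v\<in>U. real (own E U v))"
  proof (rule sum_mono)
    fix v assume vU: "v \<in> U"
    have "own E U v \<le> own E V v" unfolding own_def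
      by (rule card_mono) (use finV UV in auto)
    hence "own E U v \<le> d" using degd vU UV by fastforce
    thus "(2 * real r - 1) * g v \<le> real (own E U v)" using key unfolding g_def by blast
  qed
  hence "T2 \<le> T1" using T1v T2v by (simp add: sum_distrib_left[symmetric])
  thus False using T12 by simp
qed

end




context gctx begin

lemma finE: "finite E"
proof -
  have "E \<subseteq> Pow V"
  proof
    fix e assume "e \<in> E"
    then obtain a b where "e = {a,b}" "a \<in> V" "b \<in> V" using sg unfolding simple_graph_def by blast
    thus "e \<in> Pow V" by simp
  qed
  thus ?thesis using finV by (meson finite_Pow_iff finite_subset)
qed

lemma build:
  assumes "U \<subseteq> V"
  shows "\<exists>D lev side. D \<subseteq> U \<times> U \<and> (\<forall>a b. (a,b) \<in> D \<longrightarrow> {a,b} \<in> E) \<and>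
     (\<forall>a b. a \<in> U \<longrightarrow> b \<in> U \<longrightarrow> {a,b} \<in> E \<longrightarrow> ((a,b) \<in> D \<longleftrightarrow> (b,a) \<notin> D)) \<and>
     (\<forall>a b. (a,b) \<in> D \<longrightarrow> lev a < (lev b :: nat) \<or> (lev a = lev b \<and> side a \<noteq> (side b :: bool))) \<and>
     (\<forall>v\<in>U. real (card {w. (v,w) \<in> D}) \<le> c + 1)"
  using assms
proof (induction "card U" arbitrary: U rule: less_induct)
  case less
  have finU: "finite U" using less.prems finV finite_subset by auto
  show ?case
  proof (cases "U = {}")
    case True
    show ?thesis by (rule exI[of _ "{}"]) (simp add: True)
  next
    case False
    obtain i j P where PU: "P \<subseteq> U" and Pne: "P \<noteq> {}" and Pcol: "\<forall>v\<in>P. col v = i \<or> col v = j"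
      and Pown: "\<forall>v\<in>P. 2 * (real (own E U v) - c) - 1 \<le> real (own E P v)"
      using exists_P[OF less.prems False] by blast
    define U' where "U' = U - P"
    have lt: "card U' < card U" unfolding U'_def using PU Pne finU by (intro psubset_card_mono) auto
    have U'V: "U' \<subseteq> V" using less.prems by (auto simp: U'_def)
    obtain D' lev' side' where D'U: "D' \<subseteq> U' \<times> U'" and D'E: "\<forall>a b. (a,b) \<in> D' \<longrightarrow> {a,b} \<in> E"
      and D'or: "\<forall>a b. a \<in> U' \<longrightarrow> b \<in> U' \<longrightarrow> {a,b} \<in> E \<longrightarrow> ((a,b) \<in> D' \<longleftrightarrow> (b,a) \<notin> D')"
      and D'lev: "\<forall>a b. (a,b) \<in> D' \<longrightarrow> lev' a < (lev' b :: nat) \<or> (lev' a = lev' b \<and> side' a \<noteq> (side' b :: bool))"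
      and D'out: "\<forall>v\<in>U'. real (card {w. (v,w) \<in> D'}) \<le> c + 1"
      using less.hyps[OF lt U'V] by (elim exE conjE) blast
    define F where "F = {e\<in>E. e \<subseteq> P}"
    have finF: "finite F" using finE by (simp add: F_def)
    have twoF: "\<forall>e\<in>F. \<exists>a b. a \<noteq> b \<and> e = {a,b}"
    proof
      fix e assume "e \<in> F"
      hence "e \<in> E" by (simp add: F_def)
      then obtain a b where "e = {a,b}" "a \<noteq> b" using sg unfolding simple_graph_def by blast
      thus "\<exists>a b. a \<noteq> b \<and> e = {a,b}" by blast
    qed
    obtain B where BO: "Orient F B" and Bbal: "\<forall>z. 2 * card (outB B z) \<le> card (nbF F z) + 1"
      using balanced[OF finF twoF] by blast
    have nbP: "nbF F z = {w\<in>P. {z,w} \<in> E}" if "z \<in> P" for z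
      using that by (auto simp: nbF_def F_def)
    have BP: "(a,b) \<in> B \<Longrightarrow> a \<in> P \<and> b \<in> P \<and> {a,b} \<in> E" for a b
      using Orient_arc[OF BO] by (auto simp: F_def)
    define X where "X = {(p,u). p \<in> P \<and> u \<in> U' \<and> {p,u} \<in> E}"
    define D where "D = D' \<union> B \<union> X"
    define lev where "lev v = (if v \<in> P then 0 else Suc (lev' v))" for v
    define side where "side v = (if v \<in> P then col v = i else side' v)" for v
    have PU': "P \<inter> U' = {}" by (auto simp: U'_def)
    have UPU: "U = P \<union> U'" using PU by (auto simp: U'_def)
    have inD': "(a,b) \<in> D' \<Longrightarrow> a \<in> U' \<and> b \<in> U'" for a b using D'U by auto
    show ?thesis
    proof (intro exI conjI allI impI ballI)
      show "D \<subseteq> U \<times> U" using D'U BP PU by (auto simp: D_def X_def U'_def)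
    next
      fix a b assume "(a,b) \<in> D"
      thus "{a,b} \<in> E" using D'E BP by (auto simp: D_def X_def)
    next
      fix a b assume a: "a \<in> U" and b: "b \<in> U" and ab: "{a,b} \<in> E"
      show "((a,b) \<in> D) = ((b,a) \<notin> D)"
      proof (cases "a \<in> P")
        case aP: True
        show ?thesis
        proof (cases "b \<in> P")
          case bP: True
          have "{a,b} \<in> F" using ab aP bP by (simp add: F_def)
          hence "((a,b) \<in> B) = ((b,a) \<notin> B)" by (rule Orient_iff[OF BO])
          moreover have "(a,b) \<notin> D'" "(b,a) \<notin> D'" "(a,b) \<notin> X" "(b,a) \<notin> X"
            using inD' aP bP PU' by (auto simp: X_def)
          ultimately show ?thesis by (auto simp: D_def)
        next
          case bP: False
          hence bU': "b \<in> U'" using b by (simp add: U'_def)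
          have "(a,b) \<in> X" using aP bU' ab by (simp add: X_def)
          moreover have "(b,a) \<notin> D'" "(b,a) \<notin> B" "(b,a) \<notin> X"
            using inD' BP aP bP PU' by (auto simp: X_def)
          ultimately show ?thesis by (auto simp: D_def)
        qed
      next
        case aP: False
        hence aU': "a \<in> U'" using a by (simp add: U'_def)
        show ?thesis
        proof (cases "b \<in> P")
          case bP: True
          have "{b,a} = {a,b}" by blast
          hence ba: "{b,a} \<in> E" using ab by simp
          have "(b,a) \<in> X" using bP aU' ba by (simp add: X_def)
          moreover have "(a,b) \<notin> D'" "(a,b) \<notin> B" "(a,b) \<notin> X"
            using inD' BP aP bP PU' by (auto simp: X_def)
          ultimately show ?thesis by (auto simp: D_def)
        next
          case bP: False
          hence bU': "b \<in> U'" using b by (simp add: U'_def)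
          have "((a,b) \<in> D') = ((b,a) \<notin> D')" using D'or aU' bU' ab by blast
          moreover have "(a,b) \<notin> B" "(b,a) \<notin> B" "(a,b) \<notin> X" "(b,a) \<notin> X"
            using BP aP bP by (auto simp: X_def)
          ultimately show ?thesis by (auto simp: D_def)
        qed
      qed
    next
      fix a b assume abD: "(a,b) \<in> D"
      show "lev a < lev b \<or> (lev a = lev b \<and> side a \<noteq> side b)"
      proof -
        { assume "(a,b) \<in> D'"
          hence "a \<notin> P" "b \<notin> P" using inD' PU' by auto
          hence ?thesis using D'lev \<open>(a,b) \<in> D'\<close> by (auto simp: lev_def side_def) }
        moreover
        { assume "(a,b) \<in> B"
          hence abP: "a \<in> P" "b \<in> P" "{a,b} \<in> E" using BP by auto
          hence "col a \<noteq> col b" using colE by blast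
          moreover have "col a = i \<or> col a = j" "col b = i \<or> col b = j" using Pcol abP by auto
          ultimately have "(col a = i) \<noteq> (col b = i)" by auto
          hence ?thesis using abP by (simp add: lev_def side_def) }
        moreover
        { assume "(a,b) \<in> X"
          hence "a \<in> P" "b \<notin> P" using PU' by (auto simp: X_def)
          hence ?thesis by (simp add: lev_def) }
        ultimately show ?thesis using abD by (auto simp: D_def)
      qed
    next
      fix v assume vU: "v \<in> U"
      show "real (card {w. (v,w) \<in> D}) \<le> c + 1"
      proof (cases "v \<in> P")
        case False
        hence vU': "v \<in> U'" using vU by (simp add: U'_def)
        have "{w. (v,w) \<in> D} = {w. (v,w) \<in> D'}" using False BP by (auto simp: D_def X_def)
        thus ?thesis using D'out vU' by simp
      next
        case True
        have eq: "{w. (v,w) \<in> D} = outB B v \<union> {u\<in>U'. {v,u} \<in> E}"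
          using True inD' PU' by (auto simp: D_def X_def outB_def)
        have finO: "finite (outB B v)" using finite_outB[OF finF BO] .
        have disj: "outB B v \<inter> {u\<in>U'. {v,u} \<in> E} = {}" using BP PU' by (auto simp: outB_def)
        have c1: "card {w. (v,w) \<in> D} = card (outB B v) + own E U' v"
          unfolding eq own_def using finO finU disj by (subst card_Un_disjoint) (auto simp: U'_def)
        have c2: "own E U v = own E P v + own E U' v"
        proof -
          have "{w\<in>U. {v,w} \<in> E} = {w\<in>P. {v,w} \<in> E} \<union> {w\<in>U'. {v,w} \<in> E}" using UPU by auto
          moreover have "finite {w\<in>P. {v,w} \<in> E}" "finite {w\<in>U'. {v,w} \<in> E}"
            using finU PU by (auto simp: U'_def intro: finite_subset)
          ultimately show ?thesis unfolding own_def using PU' by (simp add: card_Un_disjoint disjoint_iff)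
        qed
        have c3: "2 * card (outB B v) \<le> own E P v + 1"
          using spec[OF Bbal, of v] nbP[OF True] by (simp add: own_def)
        have c4: "2 * (real (own E U v) - c) - 1 \<le> real (own E P v)" using Pown True by blast
        have "real (card {w. (v,w) \<in> D}) = real (card (outB B v)) + real (own E U' v)" using c1 by simp
        moreover have "2 * real (card (outB B v)) \<le> real (own E P v) + 1" using c3 by linarith
        moreover have "real (own E U v) = real (own E P v) + real (own E U' v)" using c2 by simp
        ultimately show ?thesis using c4 by argo
      qed
    qed
  qed
qed

end




lemma sum_outdeg:
  assumes "finite Y" "finite L"
  shows "(\<Sum>v\<in>L. outdeg Y v) = card {e\<in>Y. fst e \<in> L}"
proof -
  have "(\<Sum>v\<in>L. outdeg Y v) = (\<Sum>v\<in>L. card {e\<in>{e\<in>Y. fst e \<in> L}. fst e = v})"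
    by (rule sum.cong[OF refl]) (auto simp: outdeg_def card_out_fst intro!: arg_cong[where f=card])
  also have "\<dots> = card {e\<in>Y. fst e \<in> L}" by (rule fiber_card_sum) (use assms in auto)
  finally show ?thesis .
qed

lemma sum_indeg:
  assumes "finite Y" "finite L"
  shows "(\<Sum>v\<in>L. indeg Y v) = card {e\<in>Y. snd e \<in> L}"
proof -
  have "(\<Sum>v\<in>L. indeg Y v) = (\<Sum>v\<in>L. card {e\<in>{e\<in>Y. snd e \<in> L}. snd e = v})"
    by (rule sum.cong[OF refl]) (auto simp: indeg_def card_in_snd intro!: arg_cong[where f=card])
  also have "\<dots> = card {e\<in>Y. snd e \<in> L}" by (rule fiber_card_sum) (use assms in auto)
  finally show ?thesis .
qed

lemma level_even:
  fixes lev :: "'a \<Rightarrow> nat" and side :: "'a \<Rightarrow> bool"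
  assumes finV: "finite V" and DV: "D \<subseteq> V \<times> V"
    and levD: "\<forall>a b. (a,b) \<in> D \<longrightarrow> lev a < lev b \<or> (lev a = lev b \<and> side a \<noteq> side b)"
    and Y: "Y \<in> eulerian_subgraphs V D"
  shows "even (card Y)"
proof -
  have YD: "Y \<subseteq> D" and eul: "\<forall>v\<in>V. outdeg Y v = indeg Y v" using Y by (auto simp: eulerian_subgraphs_def)
  have finD: "finite D" using DV finV by (meson finite_SigmaI finite_subset)
  have finY: "finite Y" using YD finD finite_subset by auto
  have YV: "\<And>a b. (a,b) \<in> Y \<Longrightarrow> a \<in> V \<and> b \<in> V" using YD DV by auto
  have noup: "\<not> lev a < lev b" if ab: "(a,b) \<in> Y" for a b
  proof
    assume lt: "lev a < lev b"
    define L where "L = {v\<in>V. lev v \<le> lev a}"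
    have finL: "finite L" using finV by (simp add: L_def)
    have "(\<Sum>v\<in>L. outdeg Y v) = (\<Sum>v\<in>L. indeg Y v)" using eul by (intro sum.cong) (auto simp: L_def)
    hence eqc: "card {e\<in>Y. fst e \<in> L} = card {e\<in>Y. snd e \<in> L}"
      using sum_outdeg[OF finY finL] sum_indeg[OF finY finL] by simp
    have sub: "{e\<in>Y. snd e \<in> L} \<subseteq> {e\<in>Y. fst e \<in> L}"
    proof
      fix e assume e: "e \<in> {e\<in>Y. snd e \<in> L}"
      obtain x y where xy: "e = (x,y)" by (cases e)
      have "(x,y) \<in> D" using e xy YD by auto
      hence "lev x \<le> lev y" using levD by fastforce
      thus "e \<in> {e\<in>Y. fst e \<in> L}" using e xy YV[of x y] by (auto simp: L_def)
    qed
    have "(a,b) \<in> {e\<in>Y. fst e \<in> L}" "(a,b) \<notin> {e\<in>Y. snd e \<in> L}"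
      using ab lt YV[OF ab] by (auto simp: L_def)
    hence "{e\<in>Y. snd e \<in> L} \<subset> {e\<in>Y. fst e \<in> L}" using sub by blast
    hence "card {e\<in>Y. snd e \<in> L} < card {e\<in>Y. fst e \<in> L}"
      by (rule psubset_card_mono[rotated]) (use finY in simp)
    thus False using eqc by simp
  qed
  have sides: "side a \<noteq> side b" if ab: "(a,b) \<in> Y" for a b
    using levD noup[OF ab] ab YD by blast
  define A where "A = {v\<in>V. side v}"
  have finA: "finite A" using finV by (simp add: A_def)
  have "(\<Sum>v\<in>A. outdeg Y v) = (\<Sum>v\<in>A. indeg Y v)" using eul by (intro sum.cong) (auto simp: A_def)
  hence eqc: "card {e\<in>Y. fst e \<in> A} = card {e\<in>Y. snd e \<in> A}"
    using sum_outdeg[OF finY finA] sum_indeg[OF finY finA] by simp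
  have un: "Y = {e\<in>Y. fst e \<in> A} \<union> {e\<in>Y. snd e \<in> A}"
  proof
    show "Y \<subseteq> {e\<in>Y. fst e \<in> A} \<union> {e\<in>Y. snd e \<in> A}"
    proof
      fix e assume e: "e \<in> Y"
      obtain x y where xy: "e = (x,y)" by (cases e)
      have "side x \<noteq> side y" using sides e xy by blast
      thus "e \<in> {e\<in>Y. fst e \<in> A} \<union> {e\<in>Y. snd e \<in> A}" using e xy YV[of x y] by (auto simp: A_def)
    qed
  qed auto
  have dis: "{e\<in>Y. fst e \<in> A} \<inter> {e\<in>Y. snd e \<in> A} = {}"
  proof (rule ccontr)
    assume "\<not> ?thesis"
    then obtain x y where "(x,y) \<in> Y" "x \<in> A" "y \<in> A" by auto
    thus False using sides by (auto simp: A_def)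
  qed
  have "card Y = card {e\<in>Y. fst e \<in> A} + card {e\<in>Y. snd e \<in> A}"
    using finY dis by (subst un) (rule card_Un_disjoint, auto)
  thus ?thesis using eqc by simp
qed

lemma key_ineq:
  fixes r d x :: nat
  assumes "r \<ge> 2" "x \<le> d"
  shows "(2 * real r - 1) * (2 * (real x - (1 - 1 / (4 * real r + 1)) * real d) - 1) \<le> real x"
proof -
  define R where "R = real r"
  define Dd where "Dd = real d"
  define X where "X = real x"
  define q where "q = Dd / (4 * R + 1)"
  have R2: "R \<ge> 2" using assms(1) by (simp add: R_def)
  have XD: "X \<le> Dd" using assms(2) by (simp add: X_def Dd_def)
  have q0: "q \<ge> 0" using R2 by (simp add: q_def Dd_def)
  have pos: "4 * R + 1 > 0" using R2 by simp
  have Dq0: "(4 * R + 1) * q = Dd" using pos by (simp add: q_def)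
  have Dq: "Dd = 4 * (R * q) + q" using Dq0 by (simp add: algebra_simps)
  have cq: "(1 - 1 / (4 * R + 1)) * Dd = Dd - q" using pos by (simp add: q_def field_simps)
  have h1: "(4 * R - 3) * X \<le> (4 * R - 3) * Dd" using XD R2 by (intro mult_left_mono) auto
  have h1': "4 * (R * X) - 3 * X \<le> 4 * (R * Dd) - 3 * Dd" using h1 by (simp add: algebra_simps)
  have RD: "R * Dd = 4 * (R * (R * q)) + R * q" using Dq by (simp add: algebra_simps)
  have exp: "(2 * R - 1) * (2 * (X - (Dd - q)) - 1) = 4 * (R * X) - 4 * (R * Dd) + 4 * (R * q) - 2 * R - 2 * X + 2 * Dd - 2 * q + 1"
    by (simp add: algebra_simps)
  have "(2 * R - 1) * (2 * (X - (Dd - q)) - 1) \<le> X" using exp h1' Dq q0 R2 by linarith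
  thus ?thesis using cq by (simp add: R_def Dd_def X_def)
qed




lemma orient_sub:
  assumes sg: "simple_graph V E" and o: "orientation E D"
  shows "D \<subseteq> V \<times> V" "\<forall>u v. {u,v} \<in> E \<longrightarrow> (u,v) \<in> D \<or> (v,u) \<in> D"
proof -
  show "D \<subseteq> V \<times> V"
  proof
    fix e assume "e \<in> D"
    then obtain a b where e: "e = (a,b)" "(a,b) \<in> D" by (cases e) auto
    hence "{a,b} \<in> E" using o by (auto simp: orientation_def)
    thus "e \<in> V \<times> V" using simple_edge[OF sg] e by auto
  qed
  show "\<forall>u v. {u,v} \<in> E \<longrightarrow> (u,v) \<in> D \<or> (v,u) \<in> D"
    using o unfolding orientation_def by blast
qed

lemma paint_le_AT:
  assumes sg: "simple_graph V E" and o: "orientation E D" and at: "AT_orientation V D"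
    and lt: "\<forall>v\<in>V. outdeg D v < k"
  shows "f_paintable V E (\<lambda>_. k)"
proof -
  have nz: "cf (arcsIn D (V - {})) (V - {}) (outdeg D) \<noteq> 0" using AT_cf[OF sg o at] by simp
  have "painter_wins V E {} (\<lambda>_. k)"
    by (rule paint[OF sg orient_sub(1)[OF sg o] orient_sub(2)[OF sg o] _ nz]) (use lt in auto)
  thus ?thesis by (simp add: f_paintable_def)
qed

theorem theorem1p2:
  fixes V :: "'a set" and E :: "'a set set" and d r :: nat
  assumes "r \<ge> 2"
    and "simple_graph V E"
    and "max_degree_le V E d"
    and "chromatic_number V E \<le> r"
  shows "paint_number V E \<le> AT_number V E
    \<and> real (AT_number V E) \<le> (1 - 1 / (4 * real r + 1)) * real d + 2"
proof -
  note sg = assms(2)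
  have finV: "finite V" using sg by (simp add: simple_graph_def)
  have excol: "\<exists>k c. proper_coloring V E c k"
  proof -
    obtain f :: "'a \<Rightarrow> nat" and n where fn: "f ` V = {i. i < n}" "inj_on f V"
      using finite_imp_inj_to_nat_seg[OF finV] by blast
    have "proper_coloring V E f n"
      unfolding proper_coloring_def
    proof (intro conjI allI impI ballI)
      fix v assume "v \<in> V" thus "f v < n" using fn by auto
    next
      fix u v assume "{u,v} \<in> E"
      hence "u \<in> V" "v \<in> V" "u \<noteq> v" using simple_edge[OF sg] by auto
      thus "f u \<noteq> f v" using fn(2) by (auto simp: inj_on_def)
    qed
    thus ?thesis by blast
  qed
  then obtain k0 where "\<exists>c. proper_coloring V E c k0" by blast
  hence "\<exists>c. proper_coloring V E c (chromatic_number V E)"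
    unfolding chromatic_number_def by (rule LeastI)
  then obtain col where col: "proper_coloring V E col (chromatic_number V E)" by blast
  have colr: "\<forall>v\<in>V. col v < r" using col assms(4) by (auto simp: proper_coloring_def)
  have colE: "\<forall>u v. {u,v} \<in> E \<longrightarrow> col u \<noteq> col v" using col by (auto simp: proper_coloring_def)
  have degd: "\<forall>v\<in>V. own E V v \<le> d"
  proof
    fix v assume v: "v \<in> V"
    have "{w\<in>V. {v,w} \<in> E} = {u\<in>V. {u,v} \<in> E}" by (auto simp: insert_commute)
    hence "own E V v = degree V E v" by (simp add: own_def degree_def)
    thus "own E V v \<le> d" using assms(3) v by (simp add: max_degree_le_def)
  qed
  define c where "c = (1 - 1 / (4 * real r + 1)) * real d"
  have key: "\<forall>x::nat. x \<le> d \<longrightarrow> (2 * real r - 1) * (2 * (real x - c) - 1) \<le> real x"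
    using key_ineq[OF assms(1)] by (simp add: c_def)
  interpret g: gctx V E col r d c
    by unfold_locales (use sg colr colE degd key in auto)
  obtain D lev side where DV: "D \<subseteq> V \<times> V" and DE: "\<forall>a b. (a,b) \<in> D \<longrightarrow> {a,b} \<in> E"
    and Dor: "\<forall>a b. a \<in> V \<longrightarrow> b \<in> V \<longrightarrow> {a,b} \<in> E \<longrightarrow> ((a,b) \<in> D \<longleftrightarrow> (b,a) \<notin> D)"
    and Dlev: "\<forall>a b. (a,b) \<in> D \<longrightarrow> lev a < (lev b :: nat) \<or> (lev a = lev b \<and> side a \<noteq> (side b :: bool))"
    and Dout: "\<forall>v\<in>V. real (card {w. (v,w) \<in> D}) \<le> c + 1"
    using g.build[OF subset_refl] by (elim exE conjE) blast
  have orD: "orientation E D"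
    unfolding orientation_def
  proof (intro conjI allI impI ballI)
    fix p assume "p \<in> D" thus "case p of (u, v) \<Rightarrow> {u, v} \<in> E" using DE by (cases p) auto
  next
    fix u v assume "{u,v} \<in> E"
    thus "((u,v) \<in> D) = ((v,u) \<notin> D)" using Dor simple_edge[OF sg] by blast
  qed
  have atD: "AT_orientation V D"
  proof -
    have finD: "finite D" using DV finV by (meson finite_SigmaI finite_subset)
    have fin: "finite (eulerian_subgraphs V D)"
    proof (rule finite_subset)
      show "eulerian_subgraphs V D \<subseteq> Pow D" by (auto simp: eulerian_subgraphs_def)
      show "finite (Pow D)" using finD by simp
    qed
    have "{H \<in> eulerian_subgraphs V D. odd (card H)} = {}"
      using level_even[OF finV DV Dlev] by blast
    hence EO0: "EO V D = 0" unfolding EO_def by (metis card.empty)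
    have "{} \<in> {H \<in> eulerian_subgraphs V D. even (card H)}"
      by (simp add: eulerian_subgraphs_def outdeg_def indeg_def)
    moreover have "finite {H \<in> eulerian_subgraphs V D. even (card H)}" using fin by simp
    ultimately have "EE V D \<noteq> 0" unfolding EE_def by (metis card_0_eq empty_iff)
    thus ?thesis using EO0 by (simp add: AT_orientation_def)
  qed
  have c0: "c \<ge> 0" using assms(1) by (simp add: c_def)
  define K where "K = nat \<lfloor>c + 1\<rfloor> + 1"
  have outK: "\<forall>v\<in>V. outdeg D v < K"
  proof
    fix v assume "v \<in> V"
    hence "real (outdeg D v) \<le> c + 1" using Dout by (simp add: outdeg_def)
    hence "real_of_int (int (outdeg D v)) \<le> c + 1" by simp
    hence "int (outdeg D v) \<le> \<lfloor>c + 1\<rfloor>" by (simp only: le_floor_iff)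
    thus "outdeg D v < K" by (simp add: K_def)
  qed
  have exAT: "\<exists>D. orientation E D \<and> AT_orientation V D \<and> (\<forall>v\<in>V. outdeg D v < K)"
    using orD atD outK by blast
  have ATK: "AT_number V E \<le> K"
    unfolding AT_number_def by (rule Least_le) (rule exAT)
  have "real K \<le> c + 2"
  proof -
    have "real_of_int \<lfloor>c + 1\<rfloor> \<le> c + 1" by simp
    moreover have "\<lfloor>c + 1\<rfloor> \<ge> 0" using c0 by simp
    ultimately show ?thesis by (simp add: K_def)
  qed
  hence part2: "real (AT_number V E) \<le> (1 - 1 / (4 * real r + 1)) * real d + 2"
    using ATK c_def by (smt (verit) of_nat_le_iff)
  have "\<exists>D. orientation E D \<and> AT_orientation V D \<and> (\<forall>v\<in>V. outdeg D v < AT_number V E)"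
    unfolding AT_number_def by (rule LeastI_ex) (rule exI[of _ K], rule exAT)
  then obtain D0 where D0: "orientation E D0" "AT_orientation V D0" "\<forall>v\<in>V. outdeg D0 v < AT_number V E"
    by blast
  have "f_paintable V E (\<lambda>_. AT_number V E)" by (rule paint_le_AT[OF sg D0])
  hence "paint_number V E \<le> AT_number V E"
    unfolding paint_number_def by (rule Least_le)
  thus ?thesis using part2 by simp
qed



end
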